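(* Let $n \ge 4$ and let $a \in \mathbb{N}$ with $a^2 \le n$. Then there exist diagonal matrices $v_1, \dots, v_a \in M_n(\mathbb{C})$ with $\sum_{i=1}^a v_i^* v_i = \sum_{i=1}^a v_i v_i^* = I$ such that the map $\varphi(A) = \sum_{i=1}^a v_i^* A v_i$ ($A \in M_n(\mathbb{C})$) is an extremal point of $UCPT(n)$ with $r(\varphi) = a$. Consequently, the corresponding state $\pi(\varphi)$ is an extremal point of $\Gamma(n)$ which is a diagonal marginal tracial state of rank $a$.
   Context: $\mathrm{tr}$ is the normalized trace on $M_n(\mathbb{C})$ and ${}^tB$ the transpose with respect to a fixed orthonormal basis. $UCPT(n)$ is the convex set of unital, completely positive, trace-preserving linear maps $M_n(\mathbb{C}) \to M_n(\mathbb{C})$. For $\varphi \in UCPT(n)$, $r(\varphi)$ is the number $k$ of terms in a representation $\varphi(A) = \sum_{i=1}^k v_i^*Av_i$ with $v_1,\dots,v_k$ linearly independent (this number is uniquely determined). $\Gamma(n)$ is the convex set of states $\rho$ on $M_n(\mathbb{C}) \otimes M_n(\mathbb{C})$ with $\rho(A \otimes I) = \mathrm{tr}(A)$ and $\rho(I\otimes B) = \mathrm{tr}(B)$ for all $A,B$ (marginal tracial states). The map $\pi: UCPT(n) \to \Gamma(n)$ is $\pi(\varphi)(A\otimes B) = \mathrm{tr}(\varphi(A)\,{}^tB)$; it is a bijection preserving extremality, with $\mathrm{rank}(\pi(\varphi)) = r(\varphi)$, where the rank of a state is the rank of its density matrix. A linear map $\varphi$ on $M_n(\mathbb{C})$ is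 diagonal if $\varphi(A) = C \circ A$ (Schur/entrywise product) for some $C \in M_n(\mathbb{C})$; a marginal tracial state is diagonal if it equals $\pi(\varphi)$ for a diagonal $\varphi \in UCPT(n)$. *)

theory Defs
  imports "HOL-Analysis.Analysis"
begin

text \<open>Matrices in M_n(C) are represented as complex^'n^'n, where the finite
  index type 'n has CARD('n) = n elements (orthonormal basis indexed by 'n).\<close>

definition cnonneg :: "complex \<Rightarrow> bool" where
  "cnonneg z \<longleftrightarrow> Im z = 0 \<and> 0 \<le> Re z"

definition adj :: "complex^'n::finite^'m::finite \<Rightarrow> complex^'m::finite^'n::finite" where
  "adj A = (\<chi> i j. cnj (A $ j $ i))"

definition cscaleM :: "complex \<Rightarrow> complex^'n::finite^'m::finite \<Rightarrow> complex^'n::finite^'m::finite" where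
  "cscaleM c A = (\<chi> i j. c * A $ i $ j)"

definition ntr :: "complex^'n::finite^'n::finite \<Rightarrow> complex" where
  "ntr A = (\<Sum>i\<in>UNIV. A $ i $ i) / of_nat CARD('n)"

definition Tr :: "complex^'n::finite^'n::finite \<Rightarrow> complex" where
  "Tr A = (\<Sum>i\<in>UNIV. A $ i $ i)"

definition clinear_map :: "(complex^'n::finite^'n::finite \<Rightarrow> complex^'m::finite^'m::finite) \<Rightarrow> bool" where
  "clinear_map f \<longleftrightarrow> (\<forall>A B. f (A + B) = f A + f B) \<and> (\<forall>c A. f (cscaleM c A) = cscaleM c (f A))"

definition clinear_functional :: "(complex^'n::finite^'n::finite \<Rightarrow> complex) \<Rightarrow> bool" where
  "clinear_functional f \<longleftrightarrow> (\<forall>A B. f (A + B) = f A + f B) \<and> (\<forall>c A. f (cscaleM c A) = c * f A)"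

definition psd :: "complex^'m::finite^'m::finite \<Rightarrow> bool" where
  "psd X \<longleftrightarrow> (\<forall>x :: complex^'m. cnonneg (\<Sum>i\<in>UNIV. cnj (x $ i) * (X *v x) $ i))"

text \<open>Positive semidefiniteness of a k x k block matrix with blocks X p q in M_n(C),
  i.e. of an element of M_k(M_n(C)).\<close>
definition block_psd :: "nat \<Rightarrow> (nat \<Rightarrow> nat \<Rightarrow> complex^'n::finite^'n::finite) \<Rightarrow> bool" where
  "block_psd k X \<longleftrightarrow> (\<forall>x :: nat \<Rightarrow> complex^'n.
      cnonneg (\<Sum>p<k. \<Sum>q<k. \<Sum>i\<in>UNIV. cnj (x p $ i) * (X p q *v x q) $ i))"

text \<open>Complete positivity: id_k \<otimes> \<phi> is positive for every k.\<close>
definition completely_positive :: "(complex^'n::finite^'n::finite \<Rightarrow> complex^'n::finite^'n::finite) \<Rightarrow> bool" where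
  "completely_positive \<phi> \<longleftrightarrow>
     (\<forall>k X. block_psd k X \<longrightarrow> block_psd k (\<lambda>p q. \<phi> (X p q)))"

definition UCPT :: "(complex^'n::finite^'n::finite \<Rightarrow> complex^'n::finite^'n::finite) set" where
  "UCPT = {\<phi>. clinear_map \<phi> \<and> completely_positive \<phi> \<and> \<phi> (mat 1) = mat 1 \<and>
               (\<forall>A. ntr (\<phi> A) = ntr A)}"

definition extreme_in :: "('a \<Rightarrow> 'b::real_vector) set \<Rightarrow> ('a \<Rightarrow> 'b) \<Rightarrow> bool" where
  "extreme_in C x \<longleftrightarrow> x \<in> C \<and>
     (\<forall>y\<in>C. \<forall>z\<in>C. \<forall>t::real. 0 < t \<and> t < 1 \<and> x = (\<lambda>A. t *\<^sub>R y A + (1 - t) *\<^sub>R z A)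
        \<longrightarrow> y = z)"

definition cindep_fam :: "nat \<Rightarrow> (nat \<Rightarrow> complex^'n::finite^'m::finite) \<Rightarrow> bool" where
  "cindep_fam k w \<longleftrightarrow>
     (\<forall>c :: nat \<Rightarrow> complex. (\<Sum>i<k. cscaleM (c i) (w i)) = 0 \<longrightarrow> (\<forall>i<k. c i = 0))"

definition kraus_rank :: "(complex^'n::finite^'n::finite \<Rightarrow> complex^'n::finite^'n::finite) \<Rightarrow> nat" where
  "kraus_rank \<phi> = (LEAST k. \<exists>w. cindep_fam k w \<and>
       (\<forall>A. \<phi> A = (\<Sum>i<k. adj (w i) ** A ** w i)))"

text \<open>M_n(C) \<otimes> M_n(C) realised as M_{n^2}(C) indexed by 'n \<times> 'n (Kronecker product).\<close>
definition kron :: "complex^'n::finite^'n::finite \<Rightarrow> complex^'n::finite^'n::finite \<Rightarrow> complex^('n::finite \<times> 'n::finite)^('n::finite \<times> 'n::finite)" where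
  "kron A B = (\<chi> p q. A $ fst p $ fst q * B $ snd p $ snd q)"

definition is_state :: "(complex^('n::finite \<times> 'n::finite)^('n::finite \<times> 'n::finite) \<Rightarrow> complex) \<Rightarrow> bool" where
  "is_state \<rho> \<longleftrightarrow> clinear_functional \<rho> \<and> (\<forall>X. psd X \<longrightarrow> cnonneg (\<rho> X)) \<and> \<rho> (mat 1) = 1"

definition Gamma_mts :: "(complex^('n::finite \<times> 'n::finite)^('n::finite \<times> 'n::finite) \<Rightarrow> complex) set" where
  "Gamma_mts = {\<rho>. is_state \<rho> \<and> (\<forall>A. \<rho> (kron A (mat 1)) = ntr A) \<and> (\<forall>B. \<rho> (kron (mat 1) B) = ntr B)}"

definition pi_map :: "(complex^'n::finite^'n::finite \<Rightarrow> complex^'n::finite^'n::finite) \<Rightarrow> (complex^('n::finite \<times> 'n::finite)^('n::finite \<times> 'n::finite) \<Rightarrow> complex)" where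
  "pi_map \<phi> = (THE \<rho>. clinear_functional \<rho> \<and>
      (\<forall>A B. \<rho> (kron A B) = ntr (\<phi> A ** transpose B)))"

definition cindep_set :: "(complex^'m::finite) set \<Rightarrow> bool" where
  "cindep_set S \<longleftrightarrow> (\<forall>c :: complex^'m \<Rightarrow> complex.
      (\<Sum>x\<in>S. (\<chi> i. c x * x $ i)) = 0 \<longrightarrow> (\<forall>x\<in>S. c x = 0))"

definition crank :: "complex^'m::finite^'m::finite \<Rightarrow> nat" where
  "crank D = Max {card S | S. S \<subseteq> columns D \<and> cindep_set S}"

definition state_rank :: "(complex^'m::finite^'m::finite \<Rightarrow> complex) \<Rightarrow> nat" where
  "state_rank \<rho> = crank (THE D. \<forall>X. \<rho> X = Tr (D ** X))"

definition diagonal_map :: "(complex^'n::finite^'n::finite \<Rightarrow> complex^'n::finite^'n::finite) \<Rightarrow> bool" where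
  "diagonal_map \<phi> \<longleftrightarrow> (\<exists>C. \<forall>A. \<phi> A = (\<chi> i j. C $ i $ j * A $ i $ j))"

definition diagonal_mts :: "(complex^('n::finite \<times> 'n::finite)^('n::finite \<times> 'n::finite) \<Rightarrow> complex) \<Rightarrow> bool" where
  "diagonal_mts \<rho> \<longleftrightarrow> (\<exists>\<psi>\<in>UCPT. diagonal_map \<psi> \<and> \<rho> = pi_map \<psi>)"

definition diagonal_matrix :: "complex^'n::finite^'n::finite \<Rightarrow> bool" where
  "diagonal_matrix v \<longleftrightarrow> (\<forall>i j. i \<noteq> j \<longrightarrow> v $ i $ j = 0)"

end

theory Submission
  imports Defs
begin


definition qf :: "('m::finite \<Rightarrow> 'm \<Rightarrow> complex) \<Rightarrow> ('m \<Rightarrow> complex) \<Rightarrow> ('m \<Rightarrow> complex) \<Rightarrow> complex" where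
  "qf P x y = (\<Sum>j\<in>UNIV. \<Sum>k\<in>UNIV. cnj (x j) * P j k * y k)"

definition fpsd :: "('m::finite \<Rightarrow> 'm \<Rightarrow> complex) \<Rightarrow> bool" where
  "fpsd P \<longleftrightarrow> (\<forall>x. cnonneg (qf P x x))"

lemma cnonneg_sum: "(\<And>x. x \<in> S \<Longrightarrow> cnonneg (f x)) \<Longrightarrow> cnonneg (sum f S)"
  unfolding cnonneg_def by (simp add: Re_sum Im_sum sum_nonneg)

lemma cnonneg_add: "cnonneg a \<Longrightarrow> cnonneg b \<Longrightarrow> cnonneg (a + b)"
  unfolding cnonneg_def by simp

lemma cnonneg_normsq: "cnonneg (cnj z * z)"
  unfolding cnonneg_def by (simp add: complex_mult_cnj)

lemma qf_add_left: "qf P (\<lambda>i. x i + y i) z = qf P x z + qf P y z"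
  by (simp add: qf_def algebra_simps sum.distrib)
lemma qf_add_right: "qf P z (\<lambda>i. x i + y i) = qf P z x + qf P z y"
  by (simp add: qf_def algebra_simps sum.distrib)
lemma qf_scale_left: "qf P (\<lambda>i. c * x i) z = cnj c * qf P x z"
  by (simp add: qf_def algebra_simps sum_distrib_left)
lemma qf_scale_right: "qf P z (\<lambda>i. c * x i) = c * qf P z x"
  by (simp add: qf_def algebra_simps sum_distrib_left)

lemma dsum2: "(\<Sum>j\<in>(UNIV::'m::finite set). \<Sum>k\<in>(UNIV::'m set). (if j = a then c else 0) * P j k * (if k = b then d else 0)) = c * P a b * (d::complex)"
proof -
  have "\<And>j k. (if j = a then c else 0) * P j k * (if k = b then d else 0) = (if j = a then (if k = b then c * P j k * d else 0) else 0)"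
    by simp
  moreover have "(\<Sum>k\<in>UNIV. (if j = a then (if k = b then c * P j k * d else 0) else 0)) = (if j = a then c * P j b * d else 0)" for j
    by (cases "j = a") (simp_all add: sum.delta)
  ultimately show ?thesis by simp
qed

lemma qf_delta2:
  assumes "j \<noteq> k"
  shows "qf P (\<lambda>i. (if i = j then \<alpha> else 0) + (if i = k then \<beta> else 0)) (\<lambda>i. (if i = j then \<alpha> else 0) + (if i = k then \<beta> else 0))
   = cnj \<alpha> * \<alpha> * P j j + cnj \<alpha> * \<beta> * P j k + cnj \<beta> * \<alpha> * P k j + cnj \<beta> * \<beta> * P k k"
  using assms by (simp add: qf_add_left qf_add_right qf_def if_distrib[of cnj] dsum2 cong: if_cong)

lemma qf_delta1:
  shows "qf P (\<lambda>i. if i = j then \<alpha> else 0) (\<lambda>i. if i = j then \<alpha> else 0) = cnj \<alpha> * \<alpha> * P j j"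
  by (simp add: qf_def if_distrib[of cnj] dsum2 cong: if_cong)

lemma fpsd_diag: "fpsd P \<Longrightarrow> cnonneg (P j j)"
  unfolding fpsd_def using qf_delta1[of P j 1] by (metis mult_1 complex_cnj_one)

lemma fpsd_herm:
  assumes "fpsd P" shows "P k j = cnj (P j k)"
proof (cases "j = k")
  case True
  then show ?thesis using fpsd_diag[OF assms, of j] unfolding cnonneg_def by (simp add: complex_eq_iff)
next
  case False
  have r1: "Im (P j j) = 0" "Im (P k k) = 0" using fpsd_diag[OF assms] unfolding cnonneg_def by auto
  have h: "cnonneg (P j j + c * P j k + cnj c * P k j + cnj c * c * P k k)" for c
  proof -
    have "cnonneg (qf P (\<lambda>i. (if i = j then 1 else 0) + (if i = k then c else 0)) (\<lambda>i. (if i = j then 1 else 0) + (if i = k then c else 0)))"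
      using assms unfolding fpsd_def by blast
    then show ?thesis using qf_delta2[OF False, of P 1 c] by simp
  qed
  have "Im (cnj c * c * P k k) = 0" for c using r1 by (simp add: complex_mult_cnj)
  then have "Im (c * P j k + cnj c * P k j) = 0" for c
    using h[of c] r1 unfolding cnonneg_def by simp
  from this[of 1] this[of "\<i>"] show ?thesis by (simp add: complex_eq_iff)
qed

lemma qf_herm: "fpsd P \<Longrightarrow> qf P y x = cnj (qf P x y)"
proof -
  assume P: "fpsd P"
  have "cnj (qf P x y) = (\<Sum>j\<in>UNIV. \<Sum>k\<in>UNIV. x j * cnj (P j k) * cnj (y k))"
    unfolding qf_def by (simp add: cnj_sum)
  also have "\<dots> = (\<Sum>j\<in>UNIV. \<Sum>k\<in>UNIV. cnj (y k) * P k j * x j)"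
    by (intro sum.cong refl) (simp add: fpsd_herm[OF P, symmetric] ac_simps)
  also have "\<dots> = qf P y x" unfolding qf_def by (rule sum.swap)
  finally show ?thesis by simp
qed

lemma fpsd_ker:
  assumes P: "fpsd P" and z: "qf P x x = 0"
  shows "(\<Sum>k\<in>UNIV. P j k * x k) = 0"
proof -
  define y where "y = (\<lambda>j. \<Sum>k\<in>UNIV. P j k * x k)"
  define N where "N = qf P y x"
  have N: "N = (\<Sum>j\<in>UNIV. cnj (y j) * y j)"
    unfolding N_def qf_def y_def by (simp add: sum_distrib_left mult.assoc)
  have Nr: "Im N = 0" "0 \<le> Re N" unfolding N by (auto simp: Im_sum Re_sum complex_mult_cnj sum_nonneg)
  define q where "q = Re (qf P y y)"
  have q0: "0 \<le> q" "Im (qf P y y) = 0" using P unfolding fpsd_def cnonneg_def q_def by auto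
  have xy: "qf P x y = cnj N" unfolding N_def by (rule qf_herm[OF P])
  have expand: "qf P (\<lambda>i. x i + complex_of_real s * y i) (\<lambda>i. x i + complex_of_real s * y i)
      = complex_of_real (2 * s) * N + complex_of_real (s * s) * qf P y y" for s
  proof -
    have "cnj N = N" using Nr by (simp add: complex_eq_iff)
    then show ?thesis
      by (simp add: qf_add_left qf_add_right qf_scale_left qf_scale_right z xy N_def[symmetric] algebra_simps)
  qed
  have ge: "0 \<le> 2 * s * Re N + s * s * q" for s
    using P[unfolded fpsd_def, rule_format, of "\<lambda>i. x i + complex_of_real s * y i"] expand[of s] q0 Nr
    unfolding cnonneg_def q_def by simp
  have "Re N = 0"
  proof (rule ccontr)
    assume ne: "Re N \<noteq> 0"
    with Nr have pos: "0 < Re N" by simp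
    define s where "s = - Re N / (q + 1)"
    have sD: "s * (q+1) = - Re N" using q0 by (simp add: s_def)
    have "(q+1)*(q+1)*(2* s*Re N + s* s*q) = 2*(q+1)*Re N*(s*(q+1)) + (s*(q+1))*(s*(q+1))*q"
      by (simp add: algebra_simps)
    also have "\<dots> = -(Re N * Re N * (q+2))" unfolding sD by (simp add: algebra_simps)
    finally have eq: "(q+1)*(q+1)*(2* s*Re N + s* s*q) = -(Re N * Re N * (q+2))" .
    have "0 \<le> (q+1)*(q+1)*(2* s*Re N + s* s*q)" using ge[of s] q0 by simp
    moreover have "0 < Re N * Re N * (q+2)" using pos q0 by simp
    ultimately show False using eq by simp
  qed
  then have "N = 0" using Nr by (simp add: complex_eq_iff)
  then have "(\<Sum>j\<in>UNIV. cnj (y j) * y j) = 0" using N by simp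
  then have "(\<Sum>j\<in>UNIV. Re (cnj (y j) * y j)) = 0" by (metis Re_sum zero_complex.sel(1))
  then have "\<forall>j\<in>UNIV. Re (cnj (y j) * y j) = 0"
    by (subst sum_nonneg_eq_0_iff[symmetric]) (auto simp: complex_mult_cnj)
  then have "y j = 0" by (auto simp: complex_mult_cnj complex_eq_iff)
  then show ?thesis unfolding y_def .
qed

lemma fpsd_zero_diag:
  assumes P: "fpsd P" and z: "P m m = 0"
  shows "P l m = 0" "P m l = 0"
proof -
  have "qf P (\<lambda>i. if i = m then 1 else 0) (\<lambda>i. if i = m then 1 else 0) = 0"
    using qf_delta1[of P m 1] z by simp
  from fpsd_ker[OF P this, of l] show "P l m = 0"
    by (simp add: if_distrib[of "\<lambda>x. P l _ * x"] cong: if_cong)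
  then show "P m l = 0" using fpsd_herm[OF P, of l m] by simp
qed



definition dv :: "nat \<Rightarrow> complex \<Rightarrow> nat \<Rightarrow> complex \<Rightarrow> nat \<Rightarrow> complex" where
  "dv p c1 q c2 = (\<lambda>i. (if i = p then c1 else 0) + (if i = q then c2 else 0))"

definition gam :: "nat \<times> nat \<Rightarrow> nat \<Rightarrow> complex" where
  "gam pq = (if fst pq = snd pq then (\<lambda>i. if i = fst pq then 1 else 0)
     else if fst pq < snd pq then dv (fst pq) (3/5) (snd pq) (4/5)
     else dv (snd pq) (3/5) (fst pq) (4 * \<i> / 5))"

definition qs :: "nat set \<Rightarrow> (nat \<Rightarrow> nat \<Rightarrow> complex) \<Rightarrow> (nat \<Rightarrow> complex) \<Rightarrow> complex" where
  "qs S M u = (\<Sum>q\<in>S. \<Sum>p\<in>S. cnj (u q) * M q p * u p)"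

lemma dsumS: "finite S \<Longrightarrow> a \<in> S \<Longrightarrow> b \<in> S \<Longrightarrow> (\<Sum>j\<in>S. \<Sum>k\<in>S. (if j = a then c else 0) * P j k * (if k = b then d else 0)) = c * P a b * (d::complex)"
proof -
  assume S: "finite S" "a \<in> S" "b \<in> S"
  have "\<And>j k. (if j = a then c else 0) * P j k * (if k = b then d else 0) = (if j = a then (if k = b then c * P j k * d else 0) else 0)"
    by simp
  moreover have "(\<Sum>k\<in>S. (if j = a then (if k = b then c * P j k * d else 0) else 0)) = (if j = a then c * P j b * d else 0)" for j
    using S by (cases "j = a") (simp_all add: sum.delta)
  ultimately show ?thesis using S by (simp add: sum.delta)
qed

lemma qs_dv:
  assumes "finite S" "p \<in> S" "q \<in> S" "p \<noteq> q"
  shows "qs S M (dv p \<alpha> q \<beta>) = cnj \<alpha> * \<alpha> * M p p + cnj \<alpha> * \<beta> * M p q + cnj \<beta> * \<alpha> * M q p + cnj \<beta> * \<beta> * M q q"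
  using assms by (simp add: qs_def dv_def distrib_left distrib_right sum.distrib if_distrib[of cnj] dsumS cong: if_cong)

lemma qf_lin0: "qf (\<lambda>j k. c * A j k + d * B j k) x y = c * qf A x y + d * qf B x y"
proof -
  have "cnj (x j) * (c * A j k + d * B j k) * y k = c * (cnj (x j) * A j k * y k) + d * (cnj (x j) * B j k * y k)" for j k
    by (simp add: algebra_simps)
  then show ?thesis unfolding qf_def by (simp only: sum.distrib sum_distrib_left)
qed

lemma qf_lin: "qf (\<lambda>j k. complex_of_real t * A j k + complex_of_real (1-t) * B j k) x x
   = complex_of_real t * qf A x x + complex_of_real (1-t) * qf B x x"
  by (rule qf_lin0)

lemma elliptope:
  fixes g :: "'n::finite \<Rightarrow> nat \<Rightarrow> complex" and b :: "nat \<Rightarrow> 'n"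
  assumes gb: "\<And>p. p < a \<Longrightarrow> g (b p) = (\<lambda>i. if i = p then 1 else 0)"
    and gpq: "\<And>p q. p < a \<Longrightarrow> q < a \<Longrightarrow> p \<noteq> q \<Longrightarrow> \<exists>m. g m = gam (p,q)"
    and Cdef: "\<And>j k. C j k = (\<Sum>i<a. cnj (g j i) * g k i)"
    and P1: "fpsd C1" and P2: "fpsd C2" and d1: "\<And>j. C1 j j = 1"
    and t: "0 < t" "t < 1"
    and comb: "\<And>j k. C j k = complex_of_real t * C1 j k + complex_of_real (1-t) * C2 j k"
  shows "C1 = C"
proof -
  have kerG: "(\<Sum>k\<in>UNIV. C1 l k * x k) = 0" if x: "\<And>i. i < a \<Longrightarrow> (\<Sum>k\<in>UNIV. g k i * x k) = 0" for x l
  proof -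
    have "qf C x x = (\<Sum>i<a. cnj (\<Sum>k\<in>UNIV. g k i * x k) * (\<Sum>k\<in>UNIV. g k i * x k))"
      unfolding qf_def Cdef
      by (simp add: sum_distrib_left sum_distrib_right cnj_sum sum.swap[of _ "{..<a}"] ac_simps)
    also have "\<dots> = 0" using x by simp
    finally have q0: "qf C x x = 0" .
    have "C = (\<lambda>j k. complex_of_real t * C1 j k + complex_of_real (1-t) * C2 j k)"
      using comb by (intro ext) auto
    then have "qf C x x = complex_of_real t * qf C1 x x + complex_of_real (1-t) * qf C2 x x"
      using qf_lin by simp
    with q0 have "complex_of_real t * qf C1 x x + complex_of_real (1-t) * qf C2 x x = 0"
      by simp
    moreover have "cnonneg (qf C1 x x)" "cnonneg (qf C2 x x)" using P1 P2 unfolding fpsd_def by auto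
    ultimately have "qf C1 x x = 0" using t unfolding cnonneg_def
      by (auto simp: complex_eq_iff add_nonneg_eq_0_iff)
    then show ?thesis by (rule fpsd_ker[OF P1])
  qed
  define M where "M p q = C1 (b p) (b q)" for p q
  have col: "C1 l m = (\<Sum>p<a. C1 l (b p) * g m p)" for l m
  proof -
    define x where "x k = (if k = m then 1 else 0) - (\<Sum>p<a. if k = b p then g m p else 0)" for k
    have "(\<Sum>k\<in>UNIV. g k i * x k) = 0" if "i < a" for i
    proof -
      have "(\<Sum>k\<in>UNIV. g k i * x k) = g m i - (\<Sum>p<a. \<Sum>k\<in>UNIV. if k = b p then g k i * g m p else 0)"
        unfolding x_def by (simp add: right_diff_distrib sum_subtractf sum_distrib_left sum.swap[of _ "{..<a}"] if_distrib[of "\<lambda>z. _ * z"] cong: if_cong)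
      also have "(\<Sum>p<a. \<Sum>k\<in>UNIV. if k = b p then g k i * g m p else 0) = (\<Sum>p<a. g (b p) i * g m p)"
        by (simp add: sum.delta')
      also have "\<dots> = (\<Sum>p<a. if p = i then g m p else 0)"
        by (intro sum.cong refl) (simp add: gb)
      also have "\<dots> = g m i" using that by (simp add: sum.delta')
      finally show ?thesis by simp
    qed
    then have "(\<Sum>k\<in>UNIV. C1 l k * x k) = 0" by (rule kerG)
    moreover have "(\<Sum>k\<in>UNIV. C1 l k * x k) = C1 l m - (\<Sum>p<a. C1 l (b p) * g m p)"
      unfolding x_def by (simp add: right_diff_distrib sum_subtractf sum_distrib_left sum.swap[of _ "{..<a}"] if_distrib[of "\<lambda>z. _ * z"] sum.delta' cong: if_cong)
    ultimately show ?thesis by simp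
  qed
  have rep: "C1 l m = (\<Sum>q<a. \<Sum>p<a. cnj (g l q) * M q p * g m p)" for l m
  proof -
    have "C1 l m = (\<Sum>p<a. cnj (C1 (b p) l) * g m p)"
      unfolding col[of l m] by (intro sum.cong refl) (simp add: fpsd_herm[OF P1, of _ l])
    also have "\<dots> = (\<Sum>p<a. cnj (\<Sum>q<a. C1 (b p) (b q) * g l q) * g m p)"
      using col[of "b _" l] by (simp only:)
    also have "\<dots> = (\<Sum>p<a. \<Sum>q<a. cnj (g l q) * M q p * g m p)"
      by (simp add: cnj_sum sum_distrib_left M_def fpsd_herm[OF P1, symmetric] ac_simps)
    also have "\<dots> = (\<Sum>q<a. \<Sum>p<a. cnj (g l q) * M q p * g m p)" by (rule sum.swap)
    finally show ?thesis .
  qed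
  have Mdiag: "M p p = 1" for p unfolding M_def by (rule d1)
  have Moff: "M p q = 0 \<and> M q p = 0" if pq: "p < q" "q < a" for p q
  proof -
    obtain m1 where m1: "g m1 = gam (p,q)" using gpq[of p q] pq by auto
    obtain m2 where m2: "g m2 = gam (q,p)" using gpq[of q p] pq by auto
    have "1 = qs {..<a} M (dv p (3/5) q (4/5))"
      using d1[of m1] rep[of m1 m1] m1 pq by (simp add: gam_def qs_def)
    then have e1: "1 = 9/25 + 12/25 * M p q + 12/25 * M q p + 16/25"
      using pq by (simp add: qs_dv Mdiag)
    have "1 = qs {..<a} M (dv p (3/5) q (4 * \<i> / 5))"
      using d1[of m2] rep[of m2 m2] m2 pq by (simp add: gam_def qs_def)
    then have e2: "1 = 9/25 + 12 * \<i>/25 * M p q - 12 * \<i>/25 * M q p + 16/25"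
      using pq by (simp add: qs_dv Mdiag algebra_simps)
    from e1 e2 show ?thesis by (simp add: complex_eq_iff field_simps)
  qed
  have Mid: "M q p = (if q = p then 1 else 0)" if "p < a" "q < a" for p q
    using Mdiag Moff that by (cases "p < q"; cases "q < p") auto
  show ?thesis
  proof (intro ext)
    fix l m
    have "C1 l m = (\<Sum>q<a. \<Sum>p<a. cnj (g l q) * (if q = p then 1 else 0) * g m p)"
      unfolding rep by (intro sum.cong refl) (simp add: Mid)
    also have "\<dots> = (\<Sum>q<a. \<Sum>p<a. if p = q then cnj (g l q) * g m q else 0)"
      by (intro sum.cong refl) auto
    also have "\<dots> = C l m" unfolding Cdef by (simp add: sum.delta)
    finally show "C1 l m = C l m" .
  qed
qed



definition schur :: "('n::finite \<Rightarrow> 'n \<Rightarrow> complex) \<Rightarrow> complex^'n^'n \<Rightarrow> complex^'n^'n" where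
  "schur C A = (\<chi> j k. C j k * A $ j $ k)"

definition Em :: "'n::finite \<Rightarrow> 'n \<Rightarrow> complex^'n^'n" where
  "Em j k = (\<chi> x y. if x = j \<and> y = k then 1 else 0)"

lemma Em_nth[simp]: "Em j k $ x $ y = (if x = j \<and> y = k then 1 else 0)"
  by (simp add: Em_def)

lemma schur_nth[simp]: "schur C A $ j $ k = C j k * A $ j $ k"
  by (simp add: schur_def)

lemma cscaleM_nth[simp]: "cscaleM c A $ i $ j = c * A $ i $ j"
  by (simp add: cscaleM_def)

lemma psd_fpsd: "psd (X::complex^'n::finite^'n) \<longleftrightarrow> fpsd (\<lambda>j k. X $ j $ k)"
proof -
  have eq: "(\<Sum>i\<in>UNIV. cnj (x $ i) * (X *v x) $ i) = qf (\<lambda>j k. X $ j $ k) (\<lambda>i. x $ i) (\<lambda>i. x $ i)" for x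
    by (simp add: qf_def matrix_vector_mult_def sum_distrib_left ac_simps)
  show ?thesis
  proof
    assume "psd X"
    show "fpsd (\<lambda>j k. X $ j $ k)" unfolding fpsd_def
    proof
      fix x :: "'n \<Rightarrow> complex"
      have "cnonneg (\<Sum>i\<in>UNIV. cnj ((\<chi> i. x i) $ i) * (X *v (\<chi> i. x i)) $ i)"
        using \<open>psd X\<close> unfolding psd_def by blast
      then show "cnonneg (qf (\<lambda>j k. X $ j $ k) x x)" using eq[of "\<chi> i. x i"] by simp
    qed
  next
    assume "fpsd (\<lambda>j k. X $ j $ k)"
    then show "psd X" unfolding fpsd_def psd_def using eq by simp
  qed
qed

lemma clinear_zero: "clinear_map f \<Longrightarrow> f 0 = 0"
  unfolding clinear_map_def by (metis add_cancel_right_right)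

lemma clinear_sum: "clinear_map f \<Longrightarrow> f (\<Sum>x\<in>S. g x) = (\<Sum>x\<in>S. f (g x))"
proof (induction S rule: infinite_finite_induct)
  case (infinite A) then show ?case using clinear_zero by simp
next
  case empty then show ?case using clinear_zero by simp
next
  case (insert x F) then show ?case unfolding clinear_map_def by simp
qed

lemma mat_expand: "A = (\<Sum>j\<in>UNIV. \<Sum>k\<in>UNIV. cscaleM (A $ j $ k) (Em j k))"
proof -
  have "(\<Sum>j\<in>UNIV. \<Sum>k\<in>UNIV. cscaleM (A $ j $ k) (Em j k)) $ x $ y = A $ x $ y" for x y
  proof -
    have "(\<Sum>j\<in>UNIV. \<Sum>k\<in>UNIV. cscaleM (A $ j $ k) (Em j k)) $ x $ y
        = (\<Sum>j\<in>UNIV. \<Sum>k\<in>UNIV. (if j = x then (if k = y then A $ j $ k else 0) else 0))"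
      by (simp add: sum_component) (intro sum.cong refl, auto)
    also have "\<dots> = (\<Sum>j\<in>UNIV. if j = x then A $ j $ y else 0)"
      by (intro sum.cong refl) (simp add: sum.delta)
    also have "\<dots> = A $ x $ y" by (simp add: sum.delta)
    finally show ?thesis .
  qed
  then show ?thesis by (simp add: vec_eq_iff)
qed

lemma clinear_expand: "clinear_map f \<Longrightarrow> f A = (\<Sum>j\<in>UNIV. \<Sum>k\<in>UNIV. cscaleM (A $ j $ k) (f (Em j k)))"
  apply (subst mat_expand[of A])
  apply (simp add: clinear_sum)
  apply (simp add: clinear_map_def)
  done



definition BF :: "nat \<Rightarrow> (nat \<Rightarrow> nat \<Rightarrow> complex^'n::finite^'n) \<Rightarrow> (nat \<Rightarrow> complex^'n) \<Rightarrow> complex" where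
  "BF k X x = (\<Sum>p<k. \<Sum>q<k. \<Sum>i\<in>UNIV. cnj (x p $ i) * (X p q *v x q) $ i)"

lemma block_psd_BF: "block_psd k X \<longleftrightarrow> (\<forall>x. cnonneg (BF k X x))"
  unfolding block_psd_def BF_def ..

lemma schur_term:
  assumes Cg: "\<And>j k. C j k = (\<Sum>r<a. cnj (g j r) * g k r)"
  shows "cnj (y $ i) * (schur C M *v z) $ i
     = (\<Sum>r<a. cnj ((\<chi> i. g i r * y $ i) $ i) * (M *v (\<chi> i. g i r * z $ i)) $ i)"
proof -
  have "cnj (y $ i) * (schur C M *v z) $ i = (\<Sum>l\<in>UNIV. \<Sum>r<a. cnj (g i r * y $ i) * (M $ i $ l * (g l r * z $ l)))"
    by (simp add: matrix_vector_mult_def Cg sum_distrib_left sum_distrib_right ac_simps)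
  also have "\<dots> = (\<Sum>r<a. \<Sum>l\<in>UNIV. cnj (g i r * y $ i) * (M $ i $ l * (g l r * z $ l)))"
    by (rule sum.swap)
  also have "\<dots> = (\<Sum>r<a. cnj ((\<chi> i. g i r * y $ i) $ i) * (M *v (\<chi> i. g i r * z $ i)) $ i)"
    by (simp add: matrix_vector_mult_def sum_distrib_left)
  finally show ?thesis .
qed

lemma BF_schur:
  assumes Cg: "\<And>j k. C j k = (\<Sum>r<a. cnj (g j r) * g k r)"
  shows "BF k (\<lambda>p q. schur C (X p q)) x = (\<Sum>r<a. BF k X (\<lambda>p. \<chi> i. g i r * x p $ i))"
proof -
  have "BF k (\<lambda>p q. schur C (X p q)) x = (\<Sum>p<k. \<Sum>q<k. \<Sum>i\<in>UNIV. \<Sum>r<a. cnj ((\<chi> i. g i r * x p $ i) $ i) * (X p q *v (\<chi> i. g i r * x q $ i)) $ i)"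
    unfolding BF_def by (simp only: schur_term[OF Cg])
  also have "\<dots> = (\<Sum>p<k. \<Sum>q<k. \<Sum>r<a. \<Sum>i\<in>UNIV. cnj ((\<chi> i. g i r * x p $ i) $ i) * (X p q *v (\<chi> i. g i r * x q $ i)) $ i)"
    by (intro sum.cong refl sum.swap)
  also have "\<dots> = (\<Sum>p<k. \<Sum>r<a. \<Sum>q<k. \<Sum>i\<in>UNIV. cnj ((\<chi> i. g i r * x p $ i) $ i) * (X p q *v (\<chi> i. g i r * x q $ i)) $ i)"
    by (intro sum.cong refl sum.swap)
  also have "\<dots> = (\<Sum>r<a. \<Sum>p<k. \<Sum>q<k. \<Sum>i\<in>UNIV. cnj ((\<chi> i. g i r * x p $ i) $ i) * (X p q *v (\<chi> i. g i r * x q $ i)) $ i)"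
    by (rule sum.swap)
  also have "\<dots> = (\<Sum>r<a. BF k X (\<lambda>p. \<chi> i. g i r * x p $ i))"
    unfolding BF_def by simp
  finally show ?thesis .
qed

lemma schur_cp:
  assumes Cg: "\<And>j k. C j k = (\<Sum>r<a. cnj (g j r) * g k r)"
  shows "completely_positive (schur C)"
  unfolding completely_positive_def block_psd_BF
  by (auto simp: BF_schur[OF Cg] intro!: cnonneg_sum)

lemma schur_clinear: "clinear_map (schur C)"
  unfolding clinear_map_def by (simp add: vec_eq_iff algebra_simps)

lemma schur_unital: assumes "\<And>j. C j j = 1" shows "schur C (mat 1) = mat 1"
proof -
  have "C j k * (if j = k then 1 else 0) = (if j = k then 1 else 0)" for j k
    using assms[of j] by (cases "j = k") auto
  then show ?thesis by (simp add: vec_eq_iff mat_def)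
qed

lemma schur_trace: assumes "\<And>j. C j j = 1" shows "ntr (schur C A) = ntr A"
proof -
  have "(\<Sum>i\<in>UNIV. C i i * A $ i $ i) = (\<Sum>i\<in>UNIV. A $ i $ i)"
    by (rule sum.cong) (use assms in auto)
  then show ?thesis by (simp add: ntr_def)
qed

lemma schur_UCPT:
  assumes Cg: "\<And>j k. C j k = (\<Sum>r<a. cnj (g j r) * g k r)" and Cd: "\<And>j. C j j = 1"
  shows "schur C \<in> UCPT"
  unfolding UCPT_def using schur_cp[OF Cg] schur_clinear schur_unital[of C, OF Cd] schur_trace[of C, OF Cd] by auto



lemma block1: "block_psd 1 (\<lambda>p q. A) \<longleftrightarrow> psd A"
  unfolding block_psd_def psd_def
proof
  assume h: "\<forall>x::nat \<Rightarrow> complex^'a. cnonneg (\<Sum>p<1. \<Sum>q<1. \<Sum>i\<in>UNIV. cnj (x p $ i) * (A *v x q) $ i)"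
  show "\<forall>x. cnonneg (\<Sum>i\<in>UNIV. cnj (x $ i) * (A *v x) $ i)"
  proof
    fix x :: "complex^'a"
    show "cnonneg (\<Sum>i\<in>UNIV. cnj (x $ i) * (A *v x) $ i)" using h[rule_format, of "\<lambda>_. x"] by simp
  qed
next
  assume h: "\<forall>x::complex^'a. cnonneg (\<Sum>i\<in>UNIV. cnj (x $ i) * (A *v x) $ i)"
  show "\<forall>x::nat \<Rightarrow> complex^'a. cnonneg (\<Sum>p<1. \<Sum>q<1. \<Sum>i\<in>UNIV. cnj (x p $ i) * (A *v x q) $ i)"
    using h by simp
qed

lemma ucpt_pos: assumes "\<psi> \<in> UCPT" "psd A" shows "psd (\<psi> A)"
proof -
  have cp: "completely_positive \<psi>" using assms(1) unfolding UCPT_def by simp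
  have "block_psd 1 (\<lambda>p q. A)" using assms(2) block1 by blast
  then have "block_psd 1 (\<lambda>p q. \<psi> A)" using cp unfolding completely_positive_def by fastforce
  then show ?thesis using block1 by blast
qed

lemma ucpt_lin: "\<psi> \<in> UCPT \<Longrightarrow> clinear_map \<psi>"
  unfolding UCPT_def by simp

lemma dsum_and: "(\<Sum>a\<in>(UNIV::'n::finite set). \<Sum>b\<in>(UNIV::'n set). if a = j \<and> b = k then f a b else 0) = (f j k :: complex)"
proof -
  have "(\<Sum>b\<in>(UNIV::'n set). if a = j \<and> b = k then f a b else 0) = (if a = j then f a k else 0)" for a
    by (cases "a = j") (simp_all add: sum.delta)
  then show ?thesis by (simp add: sum.delta)
qed

lemma Em_psd: "psd (Em j j)"
proof -
  have eq: "qf (\<lambda>a b. Em j j $ a $ b) x x = cnj (x j) * x j" for x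
  proof -
    have "qf (\<lambda>a b. Em j j $ a $ b) x x = (\<Sum>a\<in>UNIV. \<Sum>b\<in>UNIV. if a = j \<and> b = j then cnj (x a) * x b else 0)"
      unfolding qf_def by (intro sum.cong refl) simp
    then show ?thesis by (simp only: dsum_and)
  qed
  have "fpsd (\<lambda>a b. Em j j $ a $ b)" unfolding fpsd_def eq by (simp add: cnonneg_normsq)
  then show ?thesis by (simp add: psd_fpsd)
qed

definition Jm :: "complex^'n::finite^'n" where "Jm = (\<chi> j k. 1)"

lemma Jm_psd: "psd Jm"
proof -
  have eq: "qf (\<lambda>a b. Jm $ a $ b) x x = cnj (\<Sum>j\<in>UNIV. x j) * (\<Sum>j\<in>UNIV. x j)" for x
    by (simp add: qf_def Jm_def cnj_sum sum_product)
  have "fpsd (\<lambda>a b. Jm $ a $ b)" unfolding fpsd_def eq by (simp del: cnj_sum add: cnonneg_normsq)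
  then show ?thesis by (simp add: psd_fpsd)
qed

lemma sum2: "(\<Sum>p<2. f p) = f 0 + f (1::nat)"
  by (simp add: numeral_2_eq_2)

lemma zero_lemma:
  assumes h: "\<And>c. cnonneg (cnj c * u + c * w + d)"
  shows "u = 0 \<and> w = 0"
proof -
  have d: "Im d = 0" "0 \<le> Re d" using h[of 0] unfolding cnonneg_def by auto
  have hr: "Im (complex_of_real s * (u + w)) = 0 \<and> 0 \<le> s * Re (u + w) + Re d" for s
    using h[of "complex_of_real s"] d unfolding cnonneg_def by (simp add: algebra_simps)
  have i1: "Im (u + w) = 0" using hr[of 1] by simp
  have r1: "Re (u + w) = 0"
  proof (rule ccontr)
    assume ne: "Re (u + w) \<noteq> 0"
    have "0 \<le> (- (Re d + 1) / Re (u + w)) * Re (u + w) + Re d" using hr by blast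
    then show False using ne by simp
  qed
  have hi: "Im (\<i> * complex_of_real s * (w - u)) = 0 \<and> 0 \<le> Re (\<i> * complex_of_real s * (w - u)) + Re d" for s
    using h[of "\<i> * complex_of_real s"] d unfolding cnonneg_def by (simp add: algebra_simps)
  have i2: "Re (w - u) = 0" using hi[of 1] by simp
  have r2: "Im (w - u) = 0"
  proof (rule ccontr)
    assume ne: "Im (w - u) \<noteq> 0"
    have "0 \<le> Re (\<i> * complex_of_real ((Re d + 1) / Im (w - u)) * (w - u)) + Re d" using hi by blast
    then show False using ne by simp
  qed
  show ?thesis using i1 r1 i2 r2 by (simp add: complex_eq_iff)
qed



lemma scaleR_nth2[simp]: "(t *\<^sub>R M) $ i $ j = complex_of_real t * (M $ i $ j :: complex)"
  by (simp only: vector_scaleR_component) (simp add: scaleR_conv_of_real)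

lemma cnonneg_comb0:
  assumes "cnonneg a" "cnonneg b" "0 < t" "t < 1" "complex_of_real t * a + complex_of_real (1-t) * b = 0"
  shows "a = 0 \<and> b = 0"
proof -
  have "t * Re a + (1-t) * Re b = 0" "t * Im a + (1-t) * Im b = 0"
    using assms(5) by (simp_all add: complex_eq_iff)
  moreover have "0 \<le> t * Re a" "0 \<le> (1-t) * Re b" using assms unfolding cnonneg_def by auto
  ultimately have "t * Re a = 0" "(1-t) * Re b = 0" by linarith+
  then show ?thesis using assms unfolding cnonneg_def by (simp add: complex_eq_iff)
qed

lemma ucpt_diag_off:
  assumes y: "y \<in> UCPT" and z: "z \<in> UCPT" and t: "0 < t" "t < 1"
    and comb: "\<And>A. \<phi> A = t *\<^sub>R y A + (1-t) *\<^sub>R z A" and fx: "\<phi> (Em j j) = Em j j"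
    and ml: "\<not> (m = j \<and> l = j)"
  shows "y (Em j j) $ m $ l = 0 \<and> z (Em j j) $ m $ l = 0"
proof -
  define P where "P a b = y (Em j j) $ a $ b" for a b
  define Q where "Q a b = z (Em j j) $ a $ b" for a b
  have fP: "fpsd P" unfolding P_def using ucpt_pos[OF y Em_psd] psd_fpsd by blast
  have fQ: "fpsd Q" unfolding Q_def using ucpt_pos[OF z Em_psd] psd_fpsd by blast
  have zero: "P r r = 0 \<and> Q r r = 0" if "r \<noteq> j" for r
  proof -
    have "Em j j $ r $ r = complex_of_real t * P r r + complex_of_real (1-t) * Q r r"
      using comb[of "Em j j"] fx unfolding P_def Q_def by (metis scaleR_nth2 vector_add_component)
    then have "complex_of_real t * P r r + complex_of_real (1-t) * Q r r = 0" using that by simp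
    then show ?thesis using cnonneg_comb0 fpsd_diag[OF fP] fpsd_diag[OF fQ] t by blast
  qed
  show ?thesis
  proof (cases "m = j")
    case False
    then show ?thesis using zero[OF False] fpsd_zero_diag[OF fP, of m] fpsd_zero_diag[OF fQ, of m]
      unfolding P_def Q_def by blast
  next
    case True
    with ml have "l \<noteq> j" by simp
    then show ?thesis using zero[of l] fpsd_zero_diag[OF fP, of l] fpsd_zero_diag[OF fQ, of l]
      unfolding P_def Q_def by blast
  qed
qed

lemma mat1_sum: "(mat 1 :: complex^'n::finite^'n) = (\<Sum>j\<in>UNIV. Em j j)"
proof -
  have "(\<Sum>j\<in>UNIV. Em j j) $ a $ b = (mat 1 :: complex^'n^'n) $ a $ b" for a b
  proof -
    have "(\<Sum>j\<in>UNIV. Em j j) $ a $ b = (\<Sum>j\<in>UNIV. if j = a then (if a = b then 1 else 0) else 0)"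
      by (simp only: sum_component) (intro sum.cong refl, auto)
    then show ?thesis by (simp add: sum.delta mat_def)
  qed
  then show ?thesis by (simp add: vec_eq_iff)
qed

lemma ucpt_diag_one:
  assumes y: "y \<in> UCPT" and off: "\<And>j m l. \<not> (m = j \<and> l = j) \<Longrightarrow> y (Em j j) $ m $ l = 0"
  shows "y (Em j j) = Em j j"
proof -
  have "y (mat 1) = mat 1" using y unfolding UCPT_def by simp
  moreover have "y (mat 1) = (\<Sum>i\<in>UNIV. y (Em i i))"
    by (simp only: mat1_sum clinear_sum[OF ucpt_lin[OF y]])
  ultimately have "(\<Sum>i\<in>UNIV. y (Em i i)) = mat 1" by simp
  then have "(\<Sum>i\<in>UNIV. y (Em i i)) $ j $ j = (mat 1 :: complex^'a^'a) $ j $ j" by simp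
  then have "(\<Sum>i\<in>UNIV. y (Em i i) $ j $ j) = 1" by (simp add: sum_component mat_def)
  moreover have "(\<Sum>i\<in>UNIV. y (Em i i) $ j $ j) = (\<Sum>i\<in>UNIV. if i = j then y (Em j j) $ j $ j else 0)"
    by (intro sum.cong refl) (auto simp: off)
  ultimately have "y (Em j j) $ j $ j = 1" by (simp add: sum.delta)
  then show ?thesis by (auto simp: vec_eq_iff off)
qed



lemma sum_ifmul1: "(\<Sum>j\<in>(UNIV::'n::finite set). (if j = b then 1 else 0) * f j) = (f b :: complex)"
proof -
  have "(\<lambda>j. (if j = b then 1 else 0) * f j) = (\<lambda>j. if j = b then f b else 0)" by (rule ext) auto
  then show ?thesis by (subst \<open>_ = _\<close>) (simp add: sum.delta)
qed

lemma sum_ifmul2: "(\<Sum>j\<in>(UNIV::'n::finite set). f j * (if j = a then d else 0)) = f a * (d :: complex)"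
proof -
  have "(\<lambda>j. f j * (if j = a then d else 0)) = (\<lambda>j. if j = a then f a * d else 0)" by (rule ext) auto
  then show ?thesis by (subst \<open>_ = _\<close>) (simp add: sum.delta)
qed

lemma Em_mv: "(Em a b *v v) $ i = (if i = a then v $ b else 0)"
  unfolding matrix_vector_mult_def by (simp add: sum_ifmul1)

lemma BF_Em: "BF K (\<lambda>p q. Em (ix p) (ix q)) x = cnj (\<Sum>p<K. x p $ ix p) * (\<Sum>q<K. x q $ ix q)"
proof -
  have "(\<Sum>i\<in>UNIV. cnj (x p $ i) * (Em (ix p) (ix q) *v x q) $ i) = cnj (x p $ ix p) * x q $ ix q" for p q
  proof -
    have "(\<Sum>i\<in>UNIV. cnj (x p $ i) * (Em (ix p) (ix q) *v x q) $ i) = (\<Sum>i\<in>UNIV. if i = ix p then cnj (x p $ ix p) * x q $ ix q else 0)"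
      by (intro sum.cong refl) (simp add: Em_mv)
    then show ?thesis by (simp add: sum.delta)
  qed
  then show ?thesis unfolding BF_def by (simp add: cnj_sum sum_product)
qed

lemma BF_sparse: "BF K Y (\<lambda>p. \<chi> i. if i = mm p then c p else 0)
   = (\<Sum>p<K. \<Sum>q<K. cnj (c p) * Y p q $ mm p $ mm q * c q)"
proof -
  have mv: "(M *v (\<chi> i. if i = a then d else 0)) $ i = M $ i $ a * d" for M :: "complex^'n^'n" and a d i
  proof -
    show ?thesis unfolding matrix_vector_mult_def by (simp add: sum_ifmul2)
  qed
  have "(\<Sum>i\<in>UNIV. cnj ((\<chi> i. if i = mm p then c p else 0) $ i) * (Y p q *v (\<chi> i. if i = mm q then c q else 0)) $ i)
      = cnj (c p) * Y p q $ mm p $ mm q * c q" for p q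
  proof -
    have "(\<Sum>i\<in>UNIV. cnj ((\<chi> i. if i = mm p then c p else 0) $ i) * (Y p q *v (\<chi> i. if i = mm q then c q else 0)) $ i)
      = (\<Sum>i\<in>UNIV. if i = mm p then cnj (c p) * Y p q $ mm p $ mm q * c q else 0)"
      by (intro sum.cong refl) (simp add: mv)
    then show ?thesis by (simp add: sum.delta)
  qed
  then show ?thesis unfolding BF_def by simp
qed

lemma ucpt_offdiag:
  assumes y: "y \<in> UCPT" and d: "\<And>j. y (Em j j) = Em j j" and ml: "\<not> (m = j \<and> l = k)"
  shows "y (Em j k) $ m $ l = 0"
proof (cases "j = k")
  case True
  then show ?thesis using d ml by auto
next
  case jk: False
  define ix where "ix p = (if p = 0 then j else k)" for p :: nat
  have "block_psd 2 (\<lambda>p q. Em (ix p) (ix q))"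
    unfolding block_psd_BF BF_Em by (simp del: cnj_sum add: cnonneg_normsq)
  then have bp: "block_psd 2 (\<lambda>p q. y (Em (ix p) (ix q)))"
    using y unfolding UCPT_def completely_positive_def by blast
  define B where "B = y (Em j k) $ m $ l"
  define W where "W = y (Em k j) $ l $ m"
  define mm where "mm p = (if p = 0 then m else l)" for p :: nat
  have val: "cnonneg (cnj c0 * c0 * Em j j $ m $ m + cnj c0 * B * c1 + cnj c1 * W * c0 + cnj c1 * c1 * Em k k $ l $ l)" for c0 c1
  proof -
    define c where "c p = (if p = 0 then c0 else c1)" for p :: nat
    have "cnonneg (BF 2 (\<lambda>p q. y (Em (ix p) (ix q))) (\<lambda>p. \<chi> i. if i = mm p then c p else 0))"
      using bp unfolding block_psd_BF by blast
    then show ?thesis unfolding BF_sparse sum2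
      using jk by (simp add: ix_def mm_def c_def d B_def W_def algebra_simps)
  qed
  show ?thesis
  proof (cases "m = j")
    case False
    have "cnonneg (cnj c * B + c * W + Em k k $ l $ l)" for c
      using val[of c 1] False by (simp add: algebra_simps)
    then show ?thesis using zero_lemma B_def by blast
  next
    case True
    with ml have "l \<noteq> k" by simp
    have "cnonneg (cnj c * W + c * B + Em j j $ m $ m)" for c
      using val[of 1 c] \<open>l \<noteq> k\<close> by (simp add: algebra_simps)
    then show ?thesis using zero_lemma B_def by blast
  qed
qed

lemma ucpt_schur:
  assumes y: "y \<in> UCPT" and d: "\<And>j. y (Em j j) = Em j j"
  shows "y = schur (\<lambda>j k. y (Em j k) $ j $ k)"
proof
  fix A :: "complex^'a^'a"
  have "y A $ m $ l = A $ m $ l * y (Em m l) $ m $ l" for m l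
  proof -
    have "y A $ m $ l = (\<Sum>j\<in>UNIV. \<Sum>k\<in>UNIV. A $ j $ k * y (Em j k) $ m $ l)"
      by (subst clinear_expand[OF ucpt_lin[OF y]]) (simp add: sum_component)
    also have "\<dots> = (\<Sum>j\<in>UNIV. \<Sum>k\<in>UNIV. if j = m \<and> k = l then A $ j $ k * y (Em j k) $ m $ l else 0)"
      by (intro sum.cong refl) (auto simp: ucpt_offdiag[OF y d])
    also have "\<dots> = A $ m $ l * y (Em m l) $ m $ l" by (rule dsum_and)
    finally show ?thesis .
  qed
  then show "y A = schur (\<lambda>j k. y (Em j k) $ j $ k) A" by (simp add: vec_eq_iff mult.commute)
qed

lemma schur_fpsd:
  assumes y: "y \<in> UCPT" and e: "y = schur C"
  shows "fpsd C"
proof -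
  have "psd (schur C Jm)" using ucpt_pos[OF y Jm_psd] e by simp
  moreover have "(\<lambda>j k. schur C Jm $ j $ k) = C" by (simp add: Jm_def fun_eq_iff)
  ultimately show ?thesis unfolding psd_fpsd by simp
qed



lemma schur_extreme:
  fixes g :: "'n::finite \<Rightarrow> nat \<Rightarrow> complex" and b :: "nat \<Rightarrow> 'n"
  assumes gb: "\<And>p. p < a \<Longrightarrow> g (b p) = (\<lambda>i. if i = p then 1 else 0)"
    and gpq: "\<And>p q. p < a \<Longrightarrow> q < a \<Longrightarrow> p \<noteq> q \<Longrightarrow> \<exists>m. g m = gam (p,q)"
    and Cg: "\<And>j k. C j k = (\<Sum>i<a. cnj (g j i) * g k i)"
    and Cd: "\<And>j. C j j = 1"
  shows "extreme_in UCPT (schur C)"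
  unfolding extreme_in_def
proof (intro conjI ballI allI impI)
  show "schur C \<in> UCPT" by (rule schur_UCPT[of C g a, OF Cg Cd])
  fix y z and t :: real
  assume y: "y \<in> UCPT" and z: "z \<in> UCPT" and h: "0 < t \<and> t < 1 \<and> schur C = (\<lambda>A. t *\<^sub>R y A + (1 - t) *\<^sub>R z A)"
  have t: "0 < t" "t < 1" using h by auto
  have comb: "\<And>A. schur C A = t *\<^sub>R y A + (1 - t) *\<^sub>R z A" using h by metis
  have fx: "schur C (Em j j) = Em j j" for j
  proof -
    have "C a b * (if a = j \<and> b = j then 1 else 0) = (if a = j \<and> b = j then 1 else 0)" for a b
      using Cd[of j] by auto
    then show ?thesis by (simp add: vec_eq_iff)
  qed
  have offd: "y (Em j j) $ m $ l = 0 \<and> z (Em j j) $ m $ l = 0" if "\<not> (m = j \<and> l = j)" for j m l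
    by (rule ucpt_diag_off[OF y z t comb fx that])
  have yd: "y (Em j j) = Em j j" for j using ucpt_diag_one[OF y] offd by blast
  have zd: "z (Em j j) = Em j j" for j using ucpt_diag_one[OF z] offd by blast
  define C1 where "C1 j k = y (Em j k) $ j $ k" for j k
  define C2 where "C2 j k = z (Em j k) $ j $ k" for j k
  have ys: "y = schur C1" unfolding C1_def by (rule ucpt_schur[OF y yd])
  have zs: "z = schur C2" unfolding C2_def by (rule ucpt_schur[OF z zd])
  have f1: "fpsd C1" by (rule schur_fpsd[OF y ys])
  have f2: "fpsd C2" by (rule schur_fpsd[OF z zs])
  have d1: "C1 j j = 1" for j unfolding C1_def yd by simp
  have d2: "C2 j j = 1" for j unfolding C2_def zd by simp
  have cc: "C j k = complex_of_real t * C1 j k + complex_of_real (1-t) * C2 j k" for j k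
  proof -
    have "schur C (Em j k) $ j $ k = complex_of_real t * y (Em j k) $ j $ k + complex_of_real (1-t) * z (Em j k) $ j $ k"
      unfolding comb[of "Em j k"] by (simp only: vector_add_component scaleR_nth2)
    then show ?thesis unfolding C1_def C2_def by simp
  qed
  have e1: "C1 = C" by (rule elliptope[OF gb gpq Cg f1 f2 d1 t cc])
  have cc2: "C j k = complex_of_real (1-t) * C2 j k + complex_of_real (1-(1-t)) * C1 j k" for j k
    using cc[of j k] by simp
  have e2: "C2 = C" by (rule elliptope[OF gb gpq Cg f2 f1 d2 _ _ cc2]) (use t in auto)
  show "y = z" using ys zs e1 e2 by simp
qed



definition rho0 :: "('n::finite \<Rightarrow> 'n \<Rightarrow> complex) \<Rightarrow> complex^('n \<times> 'n)^('n \<times> 'n) \<Rightarrow> complex" where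
  "rho0 C X = (\<Sum>x\<in>UNIV. \<Sum>u\<in>UNIV. C x u * X $ (x,x) $ (u,u)) / of_nat CARD('n)"

lemma pair_sum: "(\<Sum>p\<in>(UNIV::('n::finite \<times> 'm::finite) set). f p) = (\<Sum>x\<in>UNIV. \<Sum>y\<in>UNIV. f (x,y))"
proof -
  have "(\<Sum>x\<in>UNIV. \<Sum>y\<in>UNIV. f (x,y)) = (\<Sum>(x,y)\<in>UNIV\<times>UNIV. f (x,y))" by (rule sum.cartesian_product)
  then show ?thesis by simp
qed

lemma diag_pair_sum: "(\<Sum>p\<in>(UNIV::('n::finite \<times> 'n) set). if fst p = snd p then f (fst p) else 0) = (\<Sum>x\<in>UNIV. (f x :: complex))"
  unfolding pair_sum by (simp add: sum.delta)

lemma rho0_clinear: "clinear_functional (rho0 C)"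
  unfolding clinear_functional_def rho0_def
  by (simp add: algebra_simps sum.distrib sum_distrib_left add_divide_distrib)

lemma rho0_kron: "rho0 C (kron A B) = ntr (schur C A ** transpose B)"
proof -
  have e: "(schur C A ** transpose B) $ i $ i = (\<Sum>k\<in>UNIV. C i k * (A $ i $ k * B $ i $ k))" for i
    by (simp add: matrix_matrix_mult_def transpose_def mult.assoc)
  have k: "kron A B $ (x,x) $ (u,u) = A $ x $ u * B $ x $ u" for x u
    by (simp add: kron_def)
  show ?thesis unfolding rho0_def ntr_def e k ..
qed

lemma cfun_zero: "clinear_functional f \<Longrightarrow> f 0 = 0"
  unfolding clinear_functional_def by (metis add_cancel_right_right)

lemma cfun_sum: "clinear_functional f \<Longrightarrow> f (\<Sum>x\<in>S. g x) = (\<Sum>x\<in>S. f (g x))"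
proof (induction S rule: infinite_finite_induct)
  case (infinite A) then show ?case using cfun_zero by simp
next
  case empty then show ?case using cfun_zero by simp
next
  case (insert x F) then show ?case unfolding clinear_functional_def by simp
qed

lemma cfun_expand: "clinear_functional f \<Longrightarrow> f X = (\<Sum>p\<in>UNIV. \<Sum>q\<in>UNIV. X $ p $ q * f (Em p q))"
  apply (subst mat_expand[of X])
  apply (simp add: cfun_sum)
  apply (simp add: clinear_functional_def)
  done

lemma Em_kron: "(Em p q :: complex^('n::finite \<times> 'n)^('n \<times> 'n)) = kron (Em (fst p) (fst q)) (Em (snd p) (snd q))"
  by (simp add: vec_eq_iff kron_def prod_eq_iff)

lemma cfun_eq_kron:
  assumes "clinear_functional f" "clinear_functional h"
    and "\<And>A B. f (kron A B) = h (kron A B)"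
  shows "f = (h :: complex^('n::finite \<times> 'n)^('n \<times> 'n) \<Rightarrow> complex)"
proof
  fix X
  show "f X = h X"
  proof -
    have "f (Em p q) = h (Em p q)" for p q using assms(3) Em_kron by metis
    then show ?thesis using cfun_expand[OF assms(1), of X] cfun_expand[OF assms(2), of X] by simp
  qed
qed

lemma pi_map_schur: "pi_map (schur C) = rho0 C"
  unfolding pi_map_def
proof (rule the_equality)
  show "clinear_functional (rho0 C) \<and> (\<forall>A B. rho0 C (kron A B) = ntr (schur C A ** transpose B))"
    using rho0_clinear rho0_kron by blast
next
  fix \<rho> assume h: "clinear_functional \<rho> \<and> (\<forall>A B. \<rho> (kron A B) = ntr (schur C A ** transpose B))"
  show "\<rho> = rho0 C"
  proof (rule cfun_eq_kron)
    show "clinear_functional \<rho>" using h by blast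
    show "clinear_functional (rho0 C)" by (rule rho0_clinear)
    fix A B show "\<rho> (kron A B) = rho0 C (kron A B)" using h rho0_kron[of C A B] by simp
  qed
qed



lemma qf_diag:
  "qf P (\<lambda>p. if fst p = snd p then w (fst p) else 0) (\<lambda>p. if fst p = snd p then w (fst p) else 0)
   = (\<Sum>x\<in>UNIV. \<Sum>u\<in>UNIV. cnj (w x) * P (x,x) (u,u) * w u)"
  (is "qf P ?y ?y = _")
proof -
  define G where "G x u = cnj (w x) * P (x,x) (u,u) * w u" for x u
  define F where "F x q = (if fst q = snd q then G x (fst q) else 0)" for x q
  have t: "cnj (?y p) * P p q * ?y q = (if fst p = snd p then F (fst p) q else 0)" for p q
    unfolding F_def G_def by (cases p, cases q) auto
  have i: "(\<Sum>q\<in>UNIV. (if fst p = snd p then F (fst p) q else 0)) = (if fst p = snd p then (\<Sum>u\<in>UNIV. G (fst p) u) else 0)" for p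
  proof -
    have "(\<Sum>q\<in>UNIV. F x q) = (\<Sum>u\<in>UNIV. G x u)" for x unfolding F_def by (rule diag_pair_sum)
    then show ?thesis by (cases "fst p = snd p") simp_all
  qed
  have "qf P ?y ?y = (\<Sum>x\<in>UNIV. \<Sum>u\<in>UNIV. G x u)" unfolding qf_def t i by (rule diag_pair_sum)
  then show ?thesis unfolding G_def .
qed

lemma cnonneg_div: "cnonneg z \<Longrightarrow> cnonneg (z / of_nat n)"
  unfolding cnonneg_def by (simp add: Re_divide_of_nat Im_divide_of_nat)

lemma cnonneg_mult_nat: "cnonneg z \<Longrightarrow> cnonneg (of_nat n * z)"
  unfolding cnonneg_def by simp

lemma rho0_pos:
  assumes Cg: "\<And>j k. C j k = (\<Sum>r<a. cnj (g j r) * g k r)" and X: "psd X"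
  shows "cnonneg (rho0 C X)"
proof -
  have fX: "fpsd (\<lambda>p q. X $ p $ q)" using X psd_fpsd by blast
  have "(\<Sum>x\<in>UNIV. \<Sum>u\<in>UNIV. C x u * X $ (x,x) $ (u,u))
      = (\<Sum>r<a. qf (\<lambda>p q. X $ p $ q) (\<lambda>p. if fst p = snd p then g (fst p) r else 0) (\<lambda>p. if fst p = snd p then g (fst p) r else 0))"
  proof -
    have "(\<Sum>x\<in>UNIV. \<Sum>u\<in>UNIV. C x u * X $ (x,x) $ (u,u)) = (\<Sum>x\<in>UNIV. \<Sum>u\<in>UNIV. \<Sum>r<a. cnj (g x r) * X $ (x,x) $ (u,u) * g u r)"
      unfolding Cg by (simp add: sum_distrib_right sum_distrib_left ac_simps)
    also have "\<dots> = (\<Sum>x\<in>UNIV. \<Sum>r<a. \<Sum>u\<in>UNIV. cnj (g x r) * X $ (x,x) $ (u,u) * g u r)"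
      by (intro sum.cong refl sum.swap)
    also have "\<dots> = (\<Sum>r<a. \<Sum>x\<in>UNIV. \<Sum>u\<in>UNIV. cnj (g x r) * X $ (x,x) $ (u,u) * g u r)"
      by (rule sum.swap)
    also have "\<dots> = (\<Sum>r<a. qf (\<lambda>p q. X $ p $ q) (\<lambda>p. if fst p = snd p then g (fst p) r else 0) (\<lambda>p. if fst p = snd p then g (fst p) r else 0))"
      using qf_diag[of "\<lambda>p q. X $ p $ q" "\<lambda>x. g x _"] by simp
    finally show ?thesis .
  qed
  also have "cnonneg \<dots>" using fX unfolding fpsd_def by (intro cnonneg_sum) blast
  finally show ?thesis unfolding rho0_def by (rule cnonneg_div)
qed

lemma ntr_transpose: "ntr (transpose B) = ntr B"
  by (simp add: ntr_def transpose_def)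

lemma rho0_gamma:
  fixes C :: "'n::finite \<Rightarrow> 'n \<Rightarrow> complex"
  assumes Cg: "\<And>j k. C j k = (\<Sum>r<a. cnj (g j r) * g k r)" and Cd: "\<And>j. C j j = 1"
  shows "rho0 C \<in> Gamma_mts"
  unfolding Gamma_mts_def is_state_def
proof (intro CollectI conjI allI impI)
  show "clinear_functional (rho0 C)" by (rule rho0_clinear)
  fix X :: "complex^('n\<times>'n)^('n\<times>'n)" assume "psd X" then show "cnonneg (rho0 C X)" by (rule rho0_pos[OF Cg])
next
  have "(\<Sum>x\<in>UNIV. \<Sum>u\<in>UNIV. C x u * (mat 1 :: complex^('n\<times>'n)^('n\<times>'n)) $ (x,x) $ (u,u)) = (\<Sum>x\<in>UNIV. \<Sum>u\<in>UNIV. if u = x then C x x else 0)"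
    by (intro sum.cong refl) (auto simp: mat_def)
  also have "\<dots> = of_nat CARD('n)" by (simp add: Cd)
  finally show "rho0 C (mat 1) = 1" unfolding rho0_def by simp
next
  fix A :: "complex^'n^'n"
  show "rho0 C (kron A (mat 1)) = ntr A"
    unfolding rho0_kron by (simp add: transpose_mat schur_trace[of C, OF Cd])
  show "rho0 C (kron (mat 1) A) = ntr A"
    unfolding rho0_kron by (simp add: schur_unital[of C, OF Cd] ntr_transpose)
qed



lemma rho0_Em:
  fixes C :: "'n::finite \<Rightarrow> 'n \<Rightarrow> complex"
  shows "rho0 C (Em (x,y) (u,v)) = (if x = y \<and> u = v then C x u / of_nat CARD('n) else 0)"
proof (cases "x = y \<and> u = v")
  case True
  have "(\<Sum>x'\<in>UNIV. \<Sum>u'\<in>UNIV. C x' u' * (Em (x,y) (u,v) :: complex^('n\<times>'n)^('n\<times>'n)) $ (x',x') $ (u',u'))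
      = (\<Sum>x'\<in>UNIV. \<Sum>u'\<in>UNIV. if x' = x \<and> u' = u then C x' u' else 0)"
    using True by (intro sum.cong refl) auto
  then show ?thesis using True unfolding rho0_def by (simp add: dsum_and)
next
  case False
  have "(\<Sum>x'\<in>UNIV. \<Sum>u'\<in>UNIV. C x' u' * (Em (x,y) (u,v) :: complex^('n\<times>'n)^('n\<times>'n)) $ (x',x') $ (u',u')) = 0"
    using False by (intro sum.neutral ballI) auto
  then have "rho0 C (Em (x,y) (u,v)) = 0" unfolding rho0_def by simp
  then show ?thesis using False by auto
qed

lemma gamma_lin: "\<rho> \<in> Gamma_mts \<Longrightarrow> clinear_functional \<rho>"
  unfolding Gamma_mts_def is_state_def by simp
lemma gamma_pos: "\<rho> \<in> Gamma_mts \<Longrightarrow> psd X \<Longrightarrow> cnonneg (\<rho> X)"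
  unfolding Gamma_mts_def is_state_def by simp
lemma gamma_m1: "\<rho> \<in> Gamma_mts \<Longrightarrow> \<rho> (kron A (mat 1)) = ntr A"
  unfolding Gamma_mts_def by simp

lemma gamma_fpsd:
  fixes \<rho> :: "complex^('n::finite\<times>'n)^('n\<times>'n) \<Rightarrow> complex"
  assumes r: "\<rho> \<in> Gamma_mts"
  shows "fpsd (\<lambda>p q. \<rho> (Em p q))"
  unfolding fpsd_def
proof
  fix z :: "'n \<times> 'n \<Rightarrow> complex"
  define X :: "complex^('n\<times>'n)^('n\<times>'n)" where "X = (\<chi> p q. cnj (z p) * z q)"
  have "qf (\<lambda>p q. X $ p $ q) w w = cnj (\<Sum>p\<in>UNIV. z p * w p) * (\<Sum>q\<in>UNIV. z q * w q)" for w
  proof -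
    have "qf (\<lambda>p q. X $ p $ q) w w = (\<Sum>p\<in>UNIV. \<Sum>q\<in>UNIV. cnj (z p * w p) * (z q * w q))"
      unfolding qf_def X_def by (simp add: ac_simps)
    also have "\<dots> = (\<Sum>p\<in>UNIV. cnj (z p * w p)) * (\<Sum>q\<in>UNIV. z q * w q)" by (simp add: sum_product)
    finally show ?thesis by simp
  qed
  then have "psd X" unfolding psd_fpsd fpsd_def by (simp del: cnj_sum add: cnonneg_normsq)
  then have "cnonneg (\<rho> X)" by (rule gamma_pos[OF r])
  moreover have "\<rho> X = qf (\<lambda>p q. \<rho> (Em p q)) z z"
  proof -
    have "\<rho> X = (\<Sum>p\<in>UNIV. \<Sum>q\<in>UNIV. X $ p $ q * \<rho> (Em p q))" by (rule cfun_expand[OF gamma_lin[OF r]])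
    also have "\<dots> = qf (\<lambda>p q. \<rho> (Em p q)) z z" unfolding qf_def X_def by (simp add: ac_simps)
    finally show ?thesis .
  qed
  ultimately show "cnonneg (qf (\<lambda>p q. \<rho> (Em p q)) z z)" by simp
qed

lemma ntr_Em: "ntr (Em x x :: complex^'n::finite^'n) = 1 / of_nat CARD('n)"
proof -
  have "(\<Sum>i\<in>UNIV. (Em x x :: complex^'n^'n) $ i $ i) = (\<Sum>i\<in>UNIV. if i = x then 1 else 0)"
    by (intro sum.cong refl) auto
  then show ?thesis unfolding ntr_def by simp
qed



lemma rho0_extreme:
  fixes C :: "'n::finite \<Rightarrow> 'n \<Rightarrow> complex" and g :: "'n \<Rightarrow> nat \<Rightarrow> complex" and b :: "nat \<Rightarrow> 'n"
  assumes gb: "\<And>p. p < a \<Longrightarrow> g (b p) = (\<lambda>i. if i = p then 1 else 0)"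
    and gpq: "\<And>p q. p < a \<Longrightarrow> q < a \<Longrightarrow> p \<noteq> q \<Longrightarrow> \<exists>m. g m = gam (p,q)"
    and Cg: "\<And>j k. C j k = (\<Sum>i<a. cnj (g j i) * g k i)"
    and Cd: "\<And>j. C j j = 1"
  shows "extreme_in Gamma_mts (rho0 C)"
  unfolding extreme_in_def
proof (intro conjI ballI allI impI)
  show "rho0 C \<in> Gamma_mts" by (rule rho0_gamma[of C g a, OF Cg Cd])
  fix r1 r2 and t :: real
  assume r1: "r1 \<in> Gamma_mts" and r2: "r2 \<in> Gamma_mts"
    and h: "0 < t \<and> t < 1 \<and> rho0 C = (\<lambda>X. t *\<^sub>R r1 X + (1 - t) *\<^sub>R r2 X)"
  have t: "0 < t" "t < 1" using h by auto
  have comb: "rho0 C X = complex_of_real t * r1 X + complex_of_real (1-t) * r2 X" for X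
    using h by (simp add: scaleR_conv_of_real)
  define nn where "nn = (of_nat CARD('n) :: complex)"
  have nn0: "nn \<noteq> 0" unfolding nn_def by simp
  define Q1 where "Q1 p q = r1 (Em p q)" for p q
  define Q2 where "Q2 p q = r2 (Em p q)" for p q
  have f1: "fpsd Q1" unfolding Q1_def by (rule gamma_fpsd[OF r1])
  have f2: "fpsd Q2" unfolding Q2_def by (rule gamma_fpsd[OF r2])
  have off: "Q1 p p = 0 \<and> Q2 p p = 0" if "fst p \<noteq> snd p" for p
  proof -
    obtain x y where p: "p = (x,y)" by (cases p)
    have "rho0 C (Em p p) = 0" using that p by (simp add: rho0_Em)
    then have "complex_of_real t * Q1 p p + complex_of_real (1-t) * Q2 p p = 0"
      using comb unfolding Q1_def Q2_def by simp
    then show ?thesis using cnonneg_comb0 fpsd_diag[OF f1] fpsd_diag[OF f2] t by blast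
  qed
  have offQ: "Q1 p q = 0 \<and> Q1 q p = 0 \<and> Q2 p q = 0 \<and> Q2 q p = 0" if "fst p \<noteq> snd p" for p q
    using off[OF that] fpsd_zero_diag[OF f1, of p] fpsd_zero_diag[OF f2, of p] by blast
  have diag1: "Q1 (x,x) (x,x) = 1 / nn" for x
  proof -
    have "r1 (kron (Em x x) (mat 1)) = ntr (Em x x)" by (rule gamma_m1[OF r1])
    then have "r1 (kron (Em x x) (mat 1)) = 1 / nn" using ntr_Em[of x] unfolding nn_def by simp
    moreover have "r1 (kron (Em x x) (mat 1)) = (\<Sum>p\<in>UNIV. \<Sum>q\<in>UNIV. kron (Em x x) (mat 1) $ p $ q * Q1 p q)"
      unfolding Q1_def by (rule cfun_expand[OF gamma_lin[OF r1]])
    moreover have "kron (Em x x) (mat 1) $ p $ q * Q1 p q = (if p = (x,x) \<and> q = (x,x) then Q1 (x,x) (x,x) else 0)" for p q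
      using offQ by (cases p, cases q) (auto simp: kron_def mat_def)
    ultimately show ?thesis by (simp add: dsum_and)
  qed
  have diag2: "Q2 (x,x) (x,x) = 1 / nn" for x
  proof -
    have "r2 (kron (Em x x) (mat 1)) = ntr (Em x x)" by (rule gamma_m1[OF r2])
    then have "r2 (kron (Em x x) (mat 1)) = 1 / nn" using ntr_Em[of x] unfolding nn_def by simp
    moreover have "r2 (kron (Em x x) (mat 1)) = (\<Sum>p\<in>UNIV. \<Sum>q\<in>UNIV. kron (Em x x) (mat 1) $ p $ q * Q2 p q)"
      unfolding Q2_def by (rule cfun_expand[OF gamma_lin[OF r2]])
    moreover have "kron (Em x x) (mat 1) $ p $ q * Q2 p q = (if p = (x,x) \<and> q = (x,x) then Q2 (x,x) (x,x) else 0)" for p q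
      using offQ by (cases p, cases q) (auto simp: kron_def mat_def)
    ultimately show ?thesis by (simp add: dsum_and)
  qed
  define M1 where "M1 x u = nn * Q1 (x,x) (u,u)" for x u
  define M2 where "M2 x u = nn * Q2 (x,x) (u,u)" for x u
  have fM: "fpsd M" if MQ: "\<And>x u. M x u = nn * Q (x,x) (u,u)" and fQ: "fpsd Q" for M Q
    unfolding fpsd_def
  proof
    fix w
    have "qf M w w = nn * qf Q (\<lambda>p. if fst p = snd p then w (fst p) else 0) (\<lambda>p. if fst p = snd p then w (fst p) else 0)"
      unfolding qf_diag unfolding qf_def MQ by (simp add: sum_distrib_left ac_simps)
    then show "cnonneg (qf M w w)" unfolding nn_def using fQ unfolding fpsd_def by (simp add: cnonneg_mult_nat)
  qed
  have fM1: "fpsd M1" by (rule fM[OF _ f1]) (simp add: M1_def)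
  have fM2: "fpsd M2" by (rule fM[OF _ f2]) (simp add: M2_def)
  have dM1: "M1 x x = 1" for x unfolding M1_def diag1 using nn0 by simp
  have dM2: "M2 x x = 1" for x unfolding M2_def diag2 using nn0 by simp
  have cc: "C x u = complex_of_real t * M1 x u + complex_of_real (1-t) * M2 x u" for x u
  proof -
    have "C x u / nn = complex_of_real t * Q1 (x,x) (u,u) + complex_of_real (1-t) * Q2 (x,x) (u,u)"
      using comb[of "Em (x,x) (u,u)"] unfolding Q1_def Q2_def nn_def by (simp add: rho0_Em)
    then have "C x u = nn * (complex_of_real t * Q1 (x,x) (u,u) + complex_of_real (1-t) * Q2 (x,x) (u,u))"
      using nn0 by (simp add: field_simps)
    then show ?thesis unfolding M1_def M2_def by (simp add: algebra_simps)
  qed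
  have e1: "M1 = C" by (rule elliptope[OF gb gpq Cg fM1 fM2 dM1 t cc])
  have cc2: "C j k = complex_of_real (1-t) * M2 j k + complex_of_real (1-(1-t)) * M1 j k" for j k
    using cc[of j k] by simp
  have e2: "M2 = C" by (rule elliptope[OF gb gpq Cg fM2 fM1 dM2 _ _ cc2]) (use t in auto)
  have QQ: "Q1 p q = Q2 p q" for p q
  proof (cases "fst p = snd p \<and> fst q = snd q")
    case True
    obtain x y where p: "p = (x,y)" by (cases p)
    obtain u v where q: "q = (u,v)" by (cases q)
    have "M1 x u = M2 x u" using e1 e2 by simp
    then have "nn * Q1 (x,x) (u,u) = nn * Q2 (x,x) (u,u)" unfolding M1_def M2_def .
    then show ?thesis using True p q nn0 by simp
  next
    case False
    then show ?thesis using offQ[of p q] offQ[of q p] by auto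
  qed
  show "r1 = r2"
  proof
    fix X
    show "r1 X = r2 X"
      using cfun_expand[OF gamma_lin[OF r1], of X] cfun_expand[OF gamma_lin[OF r2], of X] QQ
      unfolding Q1_def Q2_def by simp
  qed
qed



definition cs :: "complex \<Rightarrow> complex^'m::finite \<Rightarrow> complex^'m" where
  "cs c v = (\<chi> i. c * v $ i)"

lemma vs_cs: "vector_space (cs :: complex \<Rightarrow> complex^'m::finite \<Rightarrow> complex^'m)"
  by unfold_locales (simp_all add: cs_def vec_eq_iff algebra_simps)

lemma mod_cs: "module (cs :: complex \<Rightarrow> complex^'m::finite \<Rightarrow> complex^'m)"
  using vs_cs module_iff_vector_space by blast

lemma cindep_indep:
  fixes S :: "(complex^'m::finite) set"
  assumes "cindep_set S" and fS: "finite S"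
  shows "\<not> module.dependent cs S"
proof
  assume "module.dependent cs S"
  then obtain t u where t: "finite t" "t \<subseteq> S" "(\<Sum>v\<in>t. cs (u v) v) = 0" and nz: "\<exists>v\<in>t. u v \<noteq> 0"
    unfolding module.dependent_explicit[OF mod_cs] by blast
  define c where "c v = (if v \<in> t then u v else 0)" for v
  have "(\<Sum>x\<in>S. (\<chi> i. c x * x $ i)) = (\<Sum>x\<in>t. (\<chi> i. c x * x $ i))"
    by (rule sum.mono_neutral_right[OF fS t(2)]) (auto simp: c_def vec_eq_iff)
  also have "\<dots> = (\<Sum>v\<in>t. cs (u v) v)" by (intro sum.cong refl) (simp add: c_def cs_def)
  finally have "(\<Sum>x\<in>S. (\<chi> i. c x * x $ i)) = 0" using t(3) by simp
  then have "\<forall>x\<in>S. c x = 0" using assms unfolding cindep_set_def by blast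
  moreover obtain v where "v \<in> t" "u v \<noteq> 0" using nz by blast
  moreover have "v \<in> S" using t(2) \<open>v \<in> t\<close> by blast
  ultimately show False unfolding c_def by force
qed

lemma finite_columns: "finite (columns (D :: complex^'m::finite^'m))"
proof -
  have "columns D = (\<lambda>i. column i D) ` UNIV" unfolding columns_def by auto
  then show ?thesis by simp
qed

lemma crank_eq:
  fixes D :: "complex^'m::finite^'m" and T :: "(complex^'m) set"
  assumes TD: "T \<subseteq> columns D" and Ti: "cindep_set T" and Tc: "card T = a" and Tf: "finite T"
    and sp: "columns D \<subseteq> module.span cs T"
  shows "crank D = a"
proof -
  have bound: "card S \<le> a" if "S \<subseteq> columns D" "cindep_set S" for S
  proof -
    have fS: "finite S" using that(1) finite_columns finite_subset by blast
    have "\<not> module.dependent cs S" by (rule cindep_indep[OF that(2) fS])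
    moreover have "S \<subseteq> module.span cs T" using that(1) sp by blast
    ultimately show ?thesis using vector_space.independent_span_bound[OF vs_cs Tf] Tc by blast
  qed
  show ?thesis unfolding crank_def
  proof (rule Max_eqI)
    show "finite {card S |S. S \<subseteq> columns D \<and> cindep_set S}"
      by (rule finite_subset[of _ "{..a}"]) (auto dest: bound)
    show "y \<le> a" if "y \<in> {card S |S. S \<subseteq> columns D \<and> cindep_set S}" for y
      using that bound by blast
    show "a \<in> {card S |S. S \<subseteq> columns D \<and> cindep_set S}" using TD Ti Tc by blast
  qed
qed



lemma Tr_mult: "Tr (D ** X) = (\<Sum>i\<in>UNIV. \<Sum>k\<in>UNIV. D $ i $ k * X $ k $ i)"
  by (simp add: Tr_def matrix_matrix_mult_def)

lemma density_the:
  fixes f :: "complex^'m::finite^'m \<Rightarrow> complex"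
  assumes f: "clinear_functional f"
  shows "(THE D. \<forall>X. f X = Tr (D ** X)) = (\<chi> i k. f (Em k i))"
proof (rule the_equality)
  show "\<forall>X. f X = Tr ((\<chi> i k. f (Em k i)) ** X)"
  proof
    fix X
    have "f X = (\<Sum>k\<in>UNIV. \<Sum>i\<in>UNIV. X $ k $ i * f (Em k i))" by (rule cfun_expand[OF f])
    also have "\<dots> = (\<Sum>i\<in>UNIV. \<Sum>k\<in>UNIV. X $ k $ i * f (Em k i))" by (rule sum.swap)
    also have "\<dots> = Tr ((\<chi> i k. f (Em k i)) ** X)" unfolding Tr_mult by (simp add: mult.commute)
    finally show "f X = Tr ((\<chi> i k. f (Em k i)) ** X)" .
  qed
next
  fix D assume h: "\<forall>X. f X = Tr (D ** X)"
  have "D $ i $ k = f (Em k i)" for i k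
  proof -
    have "Tr (D ** Em k i) = (\<Sum>i'\<in>UNIV. \<Sum>k'\<in>UNIV. if i' = i \<and> k' = k then D $ i' $ k' else 0)"
      unfolding Tr_mult by (intro sum.cong refl) auto
    also have "\<dots> = D $ i $ k" by (rule dsum_and)
    finally show ?thesis using h by simp
  qed
  then show "D = (\<chi> i k. f (Em k i))" by (simp add: vec_eq_iff)
qed

lemma rho0_state_rank:
  fixes C :: "'n::finite \<Rightarrow> 'n \<Rightarrow> complex" and g :: "'n \<Rightarrow> nat \<Rightarrow> complex" and b :: "nat \<Rightarrow> 'n"
  assumes gb: "\<And>p. p < a \<Longrightarrow> g (b p) = (\<lambda>i. if i = p then 1 else 0)"
    and Cg: "\<And>j k. C j k = (\<Sum>i<a. cnj (g j i) * g k i)"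
  shows "state_rank (rho0 C) = a"
proof -
  define nn where "nn = (of_nat CARD('n) :: complex)"
  have nn0: "nn \<noteq> 0" unfolding nn_def by simp
  define D :: "complex^('n\<times>'n)^('n\<times>'n)" where "D = (\<chi> i k. rho0 C (Em k i))"
  have sr: "state_rank (rho0 C) = crank D"
    unfolding state_rank_def D_def density_the[OF rho0_clinear] ..
  have Cb: "C (b p) u = g u p" if "p < a" for p u
  proof -
    have "C (b p) u = (\<Sum>i<a. if i = p then g u i else 0)" unfolding Cg using gb[OF that] by (intro sum.cong refl) auto
    then show ?thesis using that by simp
  qed
  have colD: "column k D = (\<chi> i. if fst k = snd k \<and> fst i = snd i then C (fst k) (fst i) / nn else 0)" for k
    unfolding column_def D_def nn_def by (cases k) (simp add: vec_eq_iff rho0_Em split_beta)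
  define \<beta> :: "nat \<Rightarrow> complex^('n\<times>'n)" where "\<beta> p = (\<chi> i. if fst i = snd i then g (fst i) p / nn else 0)" for p
  define T where "T = \<beta> ` {..<a}"
  have \<beta>b: "\<beta> p $ (b q, b q) = (if p = q then 1 / nn else 0)" if "q < a" for p q
    unfolding \<beta>_def using gb[OF that] by simp
  have inj: "inj_on \<beta> {..<a}"
  proof (rule inj_onI)
    fix p q assume pq: "p \<in> {..<a}" "q \<in> {..<a}" "\<beta> p = \<beta> q"
    then have "\<beta> p $ (b q, b q) = \<beta> q $ (b q, b q)" by simp
    then show "p = q" using \<beta>b[of q p] \<beta>b[of q q] pq nn0 by (auto split: if_splits)
  qed
  have TD: "T \<subseteq> columns D"
  proof
    fix v assume "v \<in> T"
    then obtain p where p: "p < a" "v = \<beta> p" unfolding T_def by auto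
    have "column (b p, b p) D = \<beta> p" unfolding colD \<beta>_def by (simp add: vec_eq_iff Cb[OF p(1)])
    then show "v \<in> columns D" unfolding columns_def using p by (intro CollectI exI[of _ "(b p, b p)"]) simp
  qed
  have Tc: "card T = a" unfolding T_def using card_image[OF inj] by simp
  have Tf: "finite T" unfolding T_def by simp
  have Ti: "cindep_set T" unfolding cindep_set_def
  proof (intro allI impI ballI)
    fix c :: "complex^('n\<times>'n) \<Rightarrow> complex" and v
    assume z: "(\<Sum>x\<in>T. (\<chi> i. c x * x $ i)) = 0" and v: "v \<in> T"
    obtain q where q: "q < a" "v = \<beta> q" using v unfolding T_def by auto
    have "(\<Sum>x\<in>T. (\<chi> i. c x * x $ i)) = (\<Sum>p<a. (\<chi> i. c (\<beta> p) * \<beta> p $ i))"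
      unfolding T_def by (simp add: sum.reindex[OF inj])
    then have "(\<Sum>p<a. (\<chi> i. c (\<beta> p) * \<beta> p $ i)) $ (b q, b q) = 0" using z by simp
    then have "(\<Sum>p<a. c (\<beta> p) * \<beta> p $ (b q, b q)) = 0" by (simp add: sum_component)
    moreover have "(\<Sum>p<a. c (\<beta> p) * \<beta> p $ (b q, b q)) = c (\<beta> q) / nn"
    proof -
      have "(\<Sum>p<a. c (\<beta> p) * \<beta> p $ (b q, b q)) = (\<Sum>p<a. if p = q then c (\<beta> q) / nn else 0)"
        by (intro sum.cong refl) (simp add: \<beta>b[OF q(1)])
      then show ?thesis using q by simp
    qed
    ultimately show "c v = 0" using q nn0 by simp
  qed
  have sp: "columns D \<subseteq> module.span cs T"
  proof
    fix v assume "v \<in> columns D"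
    then obtain k where k: "v = column k D" unfolding columns_def by auto
    show "v \<in> module.span cs T"
    proof (cases "fst k = snd k")
      case False
      then have "v = 0" unfolding k colD by (simp add: vec_eq_iff)
      then show ?thesis using module.span_zero[OF mod_cs] by simp
    next
      case True
      have "v = (\<Sum>p<a. cs (cnj (g (fst k) p)) (\<beta> p))"
      proof -
        have "v $ i = (\<Sum>p<a. cs (cnj (g (fst k) p)) (\<beta> p)) $ i" for i
        proof (cases "fst i = snd i")
          case True2: True
          have "v $ i = C (fst k) (fst i) / nn" unfolding k colD using True True2 by simp
          also have "\<dots> = (\<Sum>p<a. cnj (g (fst k) p) * (g (fst i) p / nn))"
            unfolding Cg by (simp add: sum_divide_distrib)
          also have "\<dots> = (\<Sum>p<a. cs (cnj (g (fst k) p)) (\<beta> p)) $ i"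
            by (simp add: sum_component cs_def \<beta>_def True2)
          finally show ?thesis .
        next
          case False
          then show ?thesis unfolding k colD by (simp add: sum_component cs_def \<beta>_def)
        qed
        then show ?thesis by (simp add: vec_eq_iff)
      qed
      moreover have "(\<Sum>p<a. cs (cnj (g (fst k) p)) (\<beta> p)) \<in> module.span cs T"
        by (intro module.span_sum[OF mod_cs] module.span_scale[OF mod_cs] module.span_base[OF mod_cs])
          (auto simp: T_def)
      ultimately show ?thesis by simp
    qed
  qed
  show ?thesis unfolding sr by (rule crank_eq[OF TD Ti Tc Tf sp])
qed



lemma orth_bound:
  fixes U :: "nat \<Rightarrow> nat \<Rightarrow> complex"
  assumes orth: "\<And>p q. p < a \<Longrightarrow> q < a \<Longrightarrow> (\<Sum>i<k. cnj (U p i) * U q i) = (if p = q then 1 else 0)"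
  shows "a \<le> k"
proof -
  define P where "P i j = (\<Sum>p<a. cnj (U p i) * U p j)" for i j
  have Pc: "P j i = cnj (P i j)" for i j unfolding P_def by (simp add: ac_simps)
  have PP: "(\<Sum>j<k. P i j * P j i) = P i i" for i
  proof -
    have "(\<Sum>j<k. P i j * P j i) = (\<Sum>j<k. \<Sum>p<a. \<Sum>q<a. cnj (U p i) * U q i * (U p j * cnj (U q j)))"
      unfolding P_def by (simp add: sum_product ac_simps)
    also have "\<dots> = (\<Sum>p<a. \<Sum>j<k. \<Sum>q<a. cnj (U p i) * U q i * (U p j * cnj (U q j)))"
      by (rule sum.swap)
    also have "\<dots> = (\<Sum>p<a. \<Sum>q<a. \<Sum>j<k. cnj (U p i) * U q i * (U p j * cnj (U q j)))"
      by (intro sum.cong refl sum.swap)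
    also have "\<dots> = (\<Sum>p<a. \<Sum>q<a. cnj (U p i) * U q i * (\<Sum>j<k. cnj (U q j) * U p j))"
      by (simp add: sum_distrib_left ac_simps)
    also have "\<dots> = (\<Sum>p<a. \<Sum>q<a. if q = p then cnj (U p i) * U p i else 0)"
      by (intro sum.cong refl) (simp add: orth)
    also have "\<dots> = P i i" unfolding P_def by simp
    finally show ?thesis .
  qed
  have Pr: "Im (P i i) = 0" "0 \<le> Re (P i i)" for i
    unfolding P_def by (simp_all add: Im_sum Re_sum complex_mult_cnj sum_nonneg)
  have le1: "Re (P i i) \<le> 1" if "i < k" for i
  proof -
    have "Re (\<Sum>j<k. P i j * P j i) = (\<Sum>j<k. (cmod (P i j))^2)"
      by (simp add: Re_sum Pc[of _ i] complex_mult_cnj cmod_power2)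
    also have "\<dots> \<ge> (cmod (P i i))^2"
      using that by (intro member_le_sum) auto
    finally have "(cmod (P i i))^2 \<le> Re (P i i)" unfolding PP .
    moreover have "cmod (P i i) = Re (P i i)" using Pr[of i] by (simp add: cmod_def)
    ultimately have "Re (P i i) * Re (P i i) \<le> Re (P i i) * 1" by (simp add: power2_eq_square)
    then show ?thesis using Pr[of i] by (cases "Re (P i i) = 0") (simp_all add: mult_le_cancel_left)
  qed
  have "of_nat a = (\<Sum>p<a. \<Sum>i<k. cnj (U p i) * U p i)"
    by (simp add: orth)
  also have "\<dots> = (\<Sum>i<k. P i i)" unfolding P_def by (rule sum.swap)
  finally have "real a = (\<Sum>i<k. Re (P i i))" by (metis Re_complex_of_real Re_sum of_real_of_nat_eq)
  also have "\<dots> \<le> (\<Sum>i<k. 1)" by (intro sum_mono le1) auto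
  finally show ?thesis by simp
qed



definition dg :: "('n::finite \<Rightarrow> nat \<Rightarrow> complex) \<Rightarrow> nat \<Rightarrow> complex^'n^'n" where
  "dg g r = (\<chi> j k. if j = k then g j r else 0)"

lemma adj_nth[simp]: "adj A $ i $ j = cnj (A $ j $ i)"
  by (simp add: adj_def)

lemma adj_dg_term: "(adj (dg g r) ** A ** dg g r) $ j $ k = cnj (g j r) * A $ j $ k * g k r"
proof -
  have "(adj (dg g r) ** A) $ j $ l = cnj (g j r) * A $ j $ l" for l
  proof -
    have "(adj (dg g r) ** A) $ j $ l = (\<Sum>m\<in>UNIV. adj (dg g r) $ j $ m * A $ m $ l)"
      by (simp add: matrix_matrix_mult_def)
    also have "\<dots> = (\<Sum>m\<in>UNIV. if m = j then cnj (g j r) * A $ j $ l else 0)"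
      by (intro sum.cong refl) (auto simp: dg_def)
    finally show ?thesis by (simp add: sum.delta)
  qed
  then have "(adj (dg g r) ** A ** dg g r) $ j $ k = (\<Sum>l\<in>UNIV. cnj (g j r) * A $ j $ l * dg g r $ l $ k)"
    by (simp add: matrix_matrix_mult_def)
  also have "\<dots> = (\<Sum>l\<in>UNIV. if l = k then cnj (g j r) * A $ j $ k * g k r else 0)"
    by (intro sum.cong refl) (auto simp: dg_def)
  finally show ?thesis by (simp add: sum.delta)
qed

lemma phi_eq:
  assumes Cg: "\<And>j k. C j k = (\<Sum>r<a. cnj (g j r) * g k r)"
  shows "(\<lambda>A. \<Sum>r<a. adj (dg g r) ** A ** dg g r) = schur C"
proof
  fix A :: "complex^'a^'a"
  show "(\<Sum>r<a. adj (dg g r) ** A ** dg g r) = schur C A"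
    by (simp add: vec_eq_iff sum_component adj_dg_term Cg sum_distrib_right sum_distrib_left ac_simps)
qed

lemma adjEm: "(adj W ** Em x y ** W) $ u $ v = cnj (W $ x $ u) * W $ y $ v"
proof -
  have "(adj W ** Em x y) $ u $ l = (if l = y then cnj (W $ x $ u) else 0)" for l
  proof -
    have "(adj W ** Em x y) $ u $ l = (\<Sum>m\<in>UNIV. adj W $ u $ m * Em x y $ m $ l)"
      by (simp add: matrix_matrix_mult_def)
    also have "\<dots> = (\<Sum>m\<in>UNIV. if m = x then (if l = y then cnj (W $ x $ u) else 0) else 0)"
      by (intro sum.cong refl) auto
    finally show ?thesis by (simp add: sum.delta)
  qed
  then have "(adj W ** Em x y ** W) $ u $ v = (\<Sum>l\<in>UNIV. (if l = y then cnj (W $ x $ u) else 0) * W $ l $ v)"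
    by (simp add: matrix_matrix_mult_def)
  also have "\<dots> = (\<Sum>l\<in>UNIV. if l = y then cnj (W $ x $ u) * W $ y $ v else 0)"
    by (intro sum.cong refl) auto
  finally show ?thesis by (simp add: sum.delta)
qed

lemma kraus_rank_schur:
  fixes g :: "'n::finite \<Rightarrow> nat \<Rightarrow> complex" and b :: "nat \<Rightarrow> 'n"
  assumes gb: "\<And>p. p < a \<Longrightarrow> g (b p) = (\<lambda>i. if i = p then 1 else 0)"
    and Cg: "\<And>j k. C j k = (\<Sum>r<a. cnj (g j r) * g k r)"
  shows "kraus_rank (\<lambda>A. \<Sum>r<a. adj (dg g r) ** A ** dg g r) = a"
proof -
  have Cb: "C (b p) (b q) = (if p = q then 1 else 0)" if "p < a" "q < a" for p q
  proof -
    have "C (b p) (b q) = (\<Sum>i<a. if i = p then (if i = q then 1 else 0) else 0)"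
      unfolding Cg using gb that by (intro sum.cong refl) auto
    then show ?thesis using that by simp
  qed
  have indep: "cindep_fam a (dg g)"
    unfolding cindep_fam_def
  proof (intro allI impI)
    fix c :: "nat \<Rightarrow> complex" and q assume z: "(\<Sum>i<a. cscaleM (c i) (dg g i)) = 0" and q: "q < a"
    have "(\<Sum>i<a. cscaleM (c i) (dg g i)) $ b q $ b q = (\<Sum>i<a. if i = q then c i else 0)"
      unfolding sum_component by (intro sum.cong refl) (simp add: dg_def gb[OF q])
    then show "c q = 0" using z q by simp
  qed
  show ?thesis unfolding kraus_rank_def
  proof (rule Least_equality)
    show "\<exists>w. cindep_fam a w \<and> (\<forall>A. (\<Sum>r<a. adj (dg g r) ** A ** dg g r) = (\<Sum>i<a. adj (w i) ** A ** w i))"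
      using indep by blast
  next
    fix k assume "\<exists>w. cindep_fam k w \<and> (\<forall>A. (\<Sum>r<a. adj (dg g r) ** A ** dg g r) = (\<Sum>i<k. adj (w i) ** A ** w i))"
    then obtain w where rep: "\<And>A. (\<Sum>r<a. adj (dg g r) ** A ** dg g r) = (\<Sum>i<k. adj (w i) ** A ** w i)" by blast
    show "a \<le> k"
    proof (rule orth_bound[where U = "\<lambda>p i. w i $ b p $ b p"])
      fix p q assume pq: "p < a" "q < a"
      have "(\<Sum>r<a. adj (dg g r) ** Em (b p) (b q) ** dg g r) = schur C (Em (b p) (b q))"
        using phi_eq[where C=C and g=g and a=a, OF Cg] by (simp add: fun_eq_iff)
      then have "(\<Sum>r<a. adj (dg g r) ** Em (b p) (b q) ** dg g r) $ b p $ b q = C (b p) (b q)"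
        by simp
      also have "\<dots> = (if p = q then 1 else 0)" by (rule Cb[OF pq])
      finally show "(\<Sum>i<k. cnj (w i $ b p $ b p) * w i $ b q $ b q) = (if p = q then 1 else 0)"
        unfolding rep by (simp add: sum_component adjEm)
    qed
  qed
qed



lemma dv_norm:
  assumes "p \<noteq> q" "p < a" "q < a"
  shows "(\<Sum>i<a. cnj (dv p c1 q c2 i) * dv p c1 q c2 i) = cnj c1 * c1 + cnj c2 * c2"
proof -
  have "(\<Sum>i<a. cnj (dv p c1 q c2 i) * dv p c1 q c2 i) = (\<Sum>i<a. (if i = p then cnj c1 * c1 else 0) + (if i = q then cnj c2 * c2 else 0))"
    using assms(1) by (intro sum.cong refl) (auto simp: dv_def)
  also have "\<dots> = cnj c1 * c1 + cnj c2 * c2" using assms by (simp add: sum.distrib)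
  finally show ?thesis .
qed

lemma gam_norm:
  assumes "p < a" "q < a"
  shows "(\<Sum>i<a. cnj (gam (p,q) i) * gam (p,q) i) = 1"
proof (cases "p = q")
  case True
  have "(\<Sum>i<a. cnj (gam (p,q) i) * gam (p,q) i) = (\<Sum>i<a. if i = p then 1 else 0)"
    using True by (intro sum.cong refl) (auto simp: gam_def)
  then show ?thesis using assms by simp
next
  case False
  show ?thesis
  proof (cases "p < q")
    case True
    then show ?thesis using False assms by (simp add: gam_def dv_norm)
  next
    case False2: False
    have "cnj (4 * \<i> / 5) * (4 * \<i> / 5) = (16/25 :: complex)" by (simp add: complex_eq_iff)
    then show ?thesis using False False2 assms by (simp add: gam_def dv_norm)
  qed
qed

lemma dg_sum1:
  assumes Cd: "\<And>j. (\<Sum>r<a. cnj (g j r) * g j r) = 1"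
  shows "(\<Sum>r<a. adj (dg g r) ** dg g r) = mat 1"
proof -
  have "(\<Sum>r<a. adj (dg g r) ** dg g r) $ j $ k = mat 1 $ j $ k" for j k
  proof -
    have t: "(adj (dg g r) ** dg g r) $ j $ k = cnj (g j r) * mat 1 $ j $ k * g k r" for r
      using adj_dg_term[of g r "mat 1" j k] by (simp add: matrix_mul_rid)
    have "(\<Sum>r<a. adj (dg g r) ** dg g r) $ j $ k = (\<Sum>r<a. cnj (g j r) * mat 1 $ j $ k * g k r)"
      by (simp add: sum_component t del: vector_matrix_mul_rid)
    also have "\<dots> = mat 1 $ j $ k" using Cd[of j] by (cases "j = k") (simp_all add: mat_def ac_simps)
    finally show ?thesis .
  qed
  then show ?thesis by (simp add: vec_eq_iff)
qed

lemma dg_sum2: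
  assumes Cd: "\<And>j. (\<Sum>r<a. cnj (g j r) * g j r) = 1"
  shows "(\<Sum>r<a. dg g r ** adj (dg g r)) = mat 1"
proof -
  have e: "(dg g r ** adj (dg g r)) $ j $ k = (if j = k then cnj (g j r) * g j r else 0)" for r j k
  proof -
    have "(dg g r ** adj (dg g r)) $ j $ k = (\<Sum>m\<in>UNIV. dg g r $ j $ m * cnj (dg g r $ k $ m))"
      by (simp add: matrix_matrix_mult_def)
    also have "\<dots> = (\<Sum>m\<in>UNIV. if m = j then (if j = k then cnj (g j r) * g j r else 0) else 0)"
      by (intro sum.cong refl) (auto simp: dg_def)
    finally show ?thesis by (simp add: sum.delta)
  qed
  have "(\<Sum>r<a. dg g r ** adj (dg g r)) $ j $ k = mat 1 $ j $ k" for j k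
    using Cd[of j] by (cases "j = k") (simp_all add: sum_component e mat_def)
  then show ?thesis by (simp add: vec_eq_iff)
qed



theorem theorem3p3:
  assumes "CARD('n::finite) \<ge> 4"
    and "a \<ge> 1"
    and "a ^ 2 \<le> CARD('n)"
  shows "\<exists>v :: nat \<Rightarrow> complex^'n^'n.
           (\<forall>i<a. diagonal_matrix (v i)) \<and>
           (\<Sum>i<a. adj (v i) ** v i) = mat 1 \<and>
           (\<Sum>i<a. v i ** adj (v i)) = mat 1 \<and>
           (let \<phi> = (\<lambda>A. \<Sum>i<a. adj (v i) ** A ** v i) in
              extreme_in UCPT \<phi> \<and> kraus_rank \<phi> = a \<and>
              extreme_in Gamma_mts (pi_map \<phi>) \<and> diagonal_mts (pi_map \<phi>) \<and>
              state_rank (pi_map \<phi>) = a)"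
proof -
  define S where "S = {..<a} \<times> {..<a}"
  have "card S \<le> card (UNIV :: 'n set)" using assms(3) unfolding S_def by (simp add: power2_eq_square)
  then obtain \<beta> :: "nat \<times> nat \<Rightarrow> 'n" where inj: "inj_on \<beta> S"
    using card_le_inj[of S "UNIV :: 'n set"] unfolding S_def by auto
  define \<tau> where "\<tau> j = (if j \<in> \<beta> ` S then the_inv_into S \<beta> j else (0,0))" for j
  have \<tau>\<beta>: "\<tau> (\<beta> x) = x" if "x \<in> S" for x
    unfolding \<tau>_def using that inj by (simp add: the_inv_into_f_f)
  have \<tau>S: "\<tau> j \<in> S" for j
    unfolding \<tau>_def using assms(2) inj by (auto simp: S_def the_inv_into_into)
  define g where "g j = gam (\<tau> j)" for j
  define b where "b p = \<beta> (p,p)" for p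
  define C where "C j k = (\<Sum>i<a. cnj (g j i) * g k i)" for j k
  have gb: "g (b p) = (\<lambda>i. if i = p then 1 else 0)" if "p < a" for p
    unfolding g_def b_def using \<tau>\<beta>[of "(p,p)"] that by (simp add: S_def gam_def)
  have gpq: "\<exists>m. g m = gam (p,q)" if "p < a" "q < a" "p \<noteq> q" for p q
    using \<tau>\<beta>[of "(p,q)"] that unfolding g_def S_def by (intro exI[of _ "\<beta> (p,q)"]) simp
  have Cg: "C j k = (\<Sum>i<a. cnj (g j i) * g k i)" for j k by (simp add: C_def)
  have Cd0: "(\<Sum>r<a. cnj (g j r) * g j r) = 1" for j
  proof -
    obtain p q where pq: "\<tau> j = (p,q)" by (cases "\<tau> j")
    then have "p < a" "q < a" using \<tau>S[of j] unfolding S_def by auto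
    then show ?thesis unfolding g_def pq by (rule gam_norm)
  qed
  have Cd: "C j j = 1" for j unfolding C_def by (rule Cd0)
  have phi: "(\<lambda>A. \<Sum>i<a. adj (dg g i) ** A ** dg g i) = schur C"
    by (rule phi_eq[where C=C and g=g and a=a, OF Cg])
  show ?thesis
  proof (intro exI[of _ "dg g"] conjI allI impI)
    show "diagonal_matrix (dg g i)" for i unfolding diagonal_matrix_def dg_def by simp
    show "(\<Sum>i<a. adj (dg g i) ** dg g i) = mat 1" by (rule dg_sum1[OF Cd0])
    show "(\<Sum>i<a. dg g i ** adj (dg g i)) = mat 1" by (rule dg_sum2[OF Cd0])
    have "extreme_in UCPT (schur C)" by (rule schur_extreme[where g=g and b=b and a=a, OF gb gpq Cg Cd])
    moreover have "kraus_rank (\<lambda>A. \<Sum>i<a. adj (dg g i) ** A ** dg g i) = a"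
      by (rule kraus_rank_schur[where g=g and b=b and C=C, OF gb Cg])
    moreover have "extreme_in Gamma_mts (rho0 C)" by (rule rho0_extreme[where g=g and b=b and a=a, OF gb gpq Cg Cd])
    moreover have "diagonal_mts (rho0 C)"
      unfolding diagonal_mts_def
    proof (intro bexI conjI)
      show "schur C \<in> UCPT" by (rule schur_UCPT[of C g a, OF Cg Cd])
      show "diagonal_map (schur C)" unfolding diagonal_map_def
        by (intro exI[of _ "\<chi> i j. C i j"]) (simp add: schur_def)
      show "rho0 C = pi_map (schur C)" by (simp add: pi_map_schur)
    qed
    moreover have "state_rank (rho0 C) = a" by (rule rho0_state_rank[where g=g and b=b, OF gb Cg])
    ultimately show "let \<phi> = (\<lambda>A. \<Sum>i<a. adj (dg g i) ** A ** dg g i) in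
              extreme_in UCPT \<phi> \<and> kraus_rank \<phi> = a \<and>
              extreme_in Gamma_mts (pi_map \<phi>) \<and> diagonal_mts (pi_map \<phi>) \<and>
              state_rank (pi_map \<phi>) = a"
      unfolding Let_def phi[symmetric] pi_map_schur[symmetric] by simp
  qed
qed


end
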